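(* Let $A$ be a group and $A_1=A\setminus\{1\}$. Let $X=\{x_i\mid i\in I\}$ with $I$ totally ordered. Let $$B=\mathrm{sgp}\langle X\cup X^{-1}\mid R\rangle,\qquad R=\{x_p^{\varepsilon}x_q^{\delta}=x_q^{\delta}x_p^{\varepsilon},\ x_q^{\varepsilon}x_q^{-\varepsilon}=1\mid \varepsilon,\delta=\pm1,\ p>q,\ p,q\in I\},$$ which is the free abelian group on $X$. A group $G$ is a Schreier extension of $A$ by $B$ if and only if the following data exist: - a factor set $\{(x_p^{\varepsilon},x_q^{\delta})\mid \varepsilon,\delta=\pm1,\ p>q\}\subseteq A$; - automorphisms $\psi_x$ of $A$ for $x\in X\cup X^{-1}$, written $a^x=\psi_x(a)$ with $a^{xy}=\psi_y(\psi_x(a))$; such that the following equations hold in $A$: 1. $(x_p^{\varepsilon},x_q^{\delta})\,(x_p^{\varepsilon},x_r^{\gamma})^{x_q^{\delta}}\,(x_q^{\delta},x_r^{\gamma})=(x_q^{\delta},x_r^{\gamma})^{x_p^{\varepsilon}}\,(x_p^{\varepsilon},x_r^{\gamma})\,(x_p^{\varepsilon},x_q^{\delta})^{x_r^{\gamma}}$, for all $p>q>r$ and $\varepsilon,\delta,\gamma=\pm1$; 2. $(x_p^{\varepsilon},x_q^{-\delta})\,(x_p^{\varepsilon},x_q^{\delta})^{x_q^{-\delta}}=1$, for all $p>q$ and $\varepsilon,\delta=\pm1$; 3. $(x_p^{\varepsilon},x_q^{\delta})^{x_p^{-\varepsilon}}\,(x_p^{-\varepsilon},x_q^{\delta})=1$,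 for all $p>q$ and $\varepsilon,\delta=\pm1$; 4. $a^{x_q^{\delta}x_p^{\varepsilon}}\,(x_p^{\varepsilon},x_q^{\delta})=(x_p^{\varepsilon},x_q^{\delta})\,a^{x_p^{\varepsilon}x_q^{\delta}}$, for all $p>q$, $\varepsilon,\delta=\pm1$ and $a\in A$; 5. $a^{x_r^{\varepsilon}x_r^{-\varepsilon}}=a$, for all $r\in I$, $\varepsilon=\pm1$ and $a\in A$; and moreover $$G\cong\mathrm{sgp}\langle A_1\cup X\cup X^{-1}\mid S\rangle,$$ where $$S=\{aa'=[aa'],\ ax^{\varepsilon}=x^{\varepsilon}a^{x^{\varepsilon}},\ x_p^{\varepsilon}x_q^{\delta}=x_q^{\delta}x_p^{\varepsilon}(x_p^{\varepsilon},x_q^{\delta}),\ x_q^{\varepsilon}x_q^{-\varepsilon}=1\mid a,a'\in A_1,\ x\in X,\ \varepsilon,\delta=\pm1,\ p>q\}.$$ Here $[aa']$ is the product in $A$, and elements equal to $1$ are read as the empty word.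
   Context: Basic definitions: - A Schreier extension of $A$ by $B$ is a group containing (a copy of) $A$ as a normal subgroup with quotient isomorphic to $B$. - $\mathrm{sgp}\langle X\mid S\rangle$ denotes the monoid presented by generators $X$ and relations $S$. - $X^{-1}=\{x_i^{-1}\mid i\in I\}$ is a set of new letters. *)

theory Defs
  imports "HOL-Algebra.Algebra"
begin

inductive pres_eq :: "'l set \<Rightarrow> ('l list \<times> 'l list) set \<Rightarrow> 'l list \<Rightarrow> 'l list \<Rightarrow> bool"
  for Y :: "'l set" and S :: "('l list \<times> 'l list) set" where
  pe_refl: "w \<in> lists Y \<Longrightarrow> pres_eq Y S w w"
| pe_sym: "pres_eq Y S u v \<Longrightarrow> pres_eq Y S v u"
| pe_trans: "pres_eq Y S u v \<Longrightarrow> pres_eq Y S v w \<Longrightarrow> pres_eq Y S u w"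
| pe_rel: "(l, r) \<in> S \<Longrightarrow> l \<in> lists Y \<Longrightarrow> r \<in> lists Y \<Longrightarrow> w1 \<in> lists Y \<Longrightarrow> w2 \<in> lists Y
           \<Longrightarrow> pres_eq Y S (w1 @ l @ w2) (w1 @ r @ w2)"

definition pres_class :: "'l set \<Rightarrow> ('l list \<times> 'l list) set \<Rightarrow> 'l list \<Rightarrow> 'l list set" where
  "pres_class Y S w = {v. pres_eq Y S w v}"

definition pres_monoid :: "'l set \<Rightarrow> ('l list \<times> 'l list) set \<Rightarrow> ('l list set) monoid" where
  "pres_monoid Y S =
     \<lparr> carrier = pres_class Y S ` lists Y,
       monoid.mult = (\<lambda>C D. {v. \<exists>u\<in>C. \<exists>w\<in>D. pres_eq Y S (u @ w) v}),
       one = pres_class Y S [] \<rparr>"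

definition schreier_ext :: "('g, 'c) monoid_scheme \<Rightarrow> ('a, 'd) monoid_scheme \<Rightarrow> ('b, 'e) monoid_scheme \<Rightarrow> bool" where
  "schreier_ext G A B \<longleftrightarrow> group G \<and>
     (\<exists>N. N \<lhd> G \<and> G\<lparr>carrier := N\<rparr> \<cong> A \<and> G Mod N \<cong> B)"

text \<open>Signs \<open>\<epsilon> = \<plusminus>1\<close> are encoded as booleans: True is +1, False is -1; \<open>-\<epsilon>\<close> is \<open>\<not>\<epsilon>\<close>.\<close>

datatype ('a, 'i) gletter = LA 'a | LX 'i bool

definition B_gens :: "'i set \<Rightarrow> ('i \<times> bool) set" where
  "B_gens I = I \<times> UNIV"

definition B_rels :: "('i::linorder) set \<Rightarrow> (('i \<times> bool) list \<times> ('i \<times> bool) list) set" where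
  "B_rels I =
     {([(p, e), (q, d)], [(q, d), (p, e)]) | p q e d. p \<in> I \<and> q \<in> I \<and> p > q}
   \<union> {([(q, e), (q, \<not> e)], []) | q e. q \<in> I}"

definition aword :: "('a, 'm) monoid_scheme \<Rightarrow> 'a \<Rightarrow> ('a, 'i) gletter list" where
  "aword A a = (if a = \<one>\<^bsub>A\<^esub> then [] else [LA a])"

definition G_gens :: "('a, 'm) monoid_scheme \<Rightarrow> 'i set \<Rightarrow> ('a, 'i) gletter set" where
  "G_gens A I = LA ` (carrier A - {\<one>\<^bsub>A\<^esub>}) \<union> {LX p e | p e. p \<in> I}"

text \<open>Relations S, with factor set f p e q d = (x_p^e, x_q^d) and psi p e = \<psi>_{x_p^e}.\<close>
definition G_rels :: "('a, 'm) monoid_scheme \<Rightarrow> ('i::linorder) set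
     \<Rightarrow> ('i \<Rightarrow> bool \<Rightarrow> 'i \<Rightarrow> bool \<Rightarrow> 'a) \<Rightarrow> ('i \<Rightarrow> bool \<Rightarrow> 'a \<Rightarrow> 'a)
     \<Rightarrow> (('a, 'i) gletter list \<times> ('a, 'i) gletter list) set" where
  "G_rels A I f psi =
     {([LA a, LA a'], aword A (a \<otimes>\<^bsub>A\<^esub> a')) | a a'. a \<in> carrier A - {\<one>\<^bsub>A\<^esub>} \<and> a' \<in> carrier A - {\<one>\<^bsub>A\<^esub>}}
   \<union> {([LA a, LX p e], LX p e # aword A (psi p e a)) | a p e. a \<in> carrier A - {\<one>\<^bsub>A\<^esub>} \<and> p \<in> I}
   \<union> {([LX p e, LX q d], [LX q d, LX p e] @ aword A (f p e q d)) | p q e d. p \<in> I \<and> q \<in> I \<and> p > q}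
   \<union> {([LX q e, LX q (\<not> e)], []) | q e. q \<in> I}"

end

theory Submission
  imports Defs
begin


declare in_lists_conv_set [simp del]

lemma pres_eq_lists: "pres_eq Y S u v \<Longrightarrow> u \<in> lists Y \<and> v \<in> lists Y"
  by (induction rule: pres_eq.induct) auto

lemma pres_eq_cong:
  assumes "pres_eq Y S u v" "w1 \<in> lists Y" "w2 \<in> lists Y"
  shows "pres_eq Y S (w1 @ u @ w2) (w1 @ v @ w2)"
  using assms
proof (induction arbitrary: w1 w2 rule: pres_eq.induct)
  case (pe_refl w) then show ?case by (intro pres_eq.pe_refl) auto
next
  case (pe_sym u v) then show ?case by (auto intro: pres_eq.pe_sym)
next
  case (pe_trans u v w) then show ?case by (meson pres_eq.pe_trans)
next
  case (pe_rel l r x1 x2)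
  then show ?case using pres_eq.pe_rel[of l r S Y "w1 @ x1" "x2 @ w2"] by auto
qed

lemma pres_eq_append:
  assumes "pres_eq Y S u v" "pres_eq Y S u' v'"
  shows "pres_eq Y S (u @ u') (v @ v')"
proof -
  have l: "u \<in> lists Y" "v \<in> lists Y" "u' \<in> lists Y" "v' \<in> lists Y"
    using assms pres_eq_lists by blast+
  have "pres_eq Y S ([] @ u @ u') ([] @ v @ u')" by (rule pres_eq_cong) (use assms l in auto)
  moreover have "pres_eq Y S (v @ u' @ []) (v @ v' @ [])" by (rule pres_eq_cong) (use assms l in auto)
  ultimately show ?thesis by (auto intro: pres_eq.pe_trans)
qed

lemma pres_eq_rel1:
  "(l, r) \<in> S \<Longrightarrow> l \<in> lists Y \<Longrightarrow> r \<in> lists Y \<Longrightarrow> pres_eq Y S l r"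
  using pres_eq.pe_rel[of l r S Y "[]" "[]"] by auto

lemma pres_eq_refl': "w \<in> lists Y \<Longrightarrow> pres_eq Y S w w" by (rule pres_eq.pe_refl)

lemma pres_class_eq_iff:
  "u \<in> lists Y \<Longrightarrow> pres_class Y S u = pres_class Y S v \<longleftrightarrow> pres_eq Y S u v"
proof
  assume u: "u \<in> lists Y" and e: "pres_class Y S u = pres_class Y S v"
  have "u \<in> pres_class Y S u" using u by (simp add: pres_class_def pres_eq.pe_refl)
  then have "pres_eq Y S v u" using e unfolding pres_class_def by blast
  then show "pres_eq Y S u v" by (rule pres_eq.pe_sym)
next
  assume "pres_eq Y S u v"
  then show "pres_class Y S u = pres_class Y S v"
    unfolding pres_class_def by (auto intro: pres_eq.pe_trans pres_eq.pe_sym)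
qed

lemma pres_class_mem: "w \<in> pres_class Y S u \<longleftrightarrow> pres_eq Y S u w"
  by (simp add: pres_class_def)

lemma pres_mult:
  assumes "u \<in> lists Y" "v \<in> lists Y"
  shows "pres_class Y S u \<otimes>\<^bsub>pres_monoid Y S\<^esub> pres_class Y S v = pres_class Y S (u @ v)"
proof -
  have "{x. \<exists>u'\<in>pres_class Y S u. \<exists>w\<in>pres_class Y S v. pres_eq Y S (u' @ w) x} = pres_class Y S (u @ v)"
  proof safe
    fix x u' w assume "u' \<in> pres_class Y S u" "w \<in> pres_class Y S v" "pres_eq Y S (u' @ w) x"
    then show "x \<in> pres_class Y S (u @ v)"
      by (auto simp: pres_class_def intro: pres_eq.pe_trans pres_eq_append)
  next
    fix x assume "x \<in> pres_class Y S (u @ v)"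
    then show "\<exists>u'\<in>pres_class Y S u. \<exists>w\<in>pres_class Y S v. pres_eq Y S (u' @ w) x"
      using assms by (auto simp: pres_class_def intro!: bexI[of _ u] bexI[of _ v] pres_eq.pe_refl)
  qed
  then show ?thesis by (simp add: pres_monoid_def)
qed

lemma pres_carrier: "carrier (pres_monoid Y S) = pres_class Y S ` lists Y"
  by (simp add: pres_monoid_def)

lemma pres_one: "\<one>\<^bsub>pres_monoid Y S\<^esub> = pres_class Y S []"
  by (simp add: pres_monoid_def)

lemma pres_monoid_monoid: "monoid (pres_monoid Y S)"
proof (rule monoidI)
  fix x y assume "x \<in> carrier (pres_monoid Y S)" "y \<in> carrier (pres_monoid Y S)"
  then obtain u v where "u \<in> lists Y" "v \<in> lists Y" "x = pres_class Y S u" "y = pres_class Y S v"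
    by (auto simp: pres_carrier)
  then show "x \<otimes>\<^bsub>pres_monoid Y S\<^esub> y \<in> carrier (pres_monoid Y S)"
    by (simp add: pres_carrier pres_mult)
next
  show "\<one>\<^bsub>pres_monoid Y S\<^esub> \<in> carrier (pres_monoid Y S)" by (auto simp: pres_carrier pres_one)
next
  fix x y z assume "x \<in> carrier (pres_monoid Y S)" "y \<in> carrier (pres_monoid Y S)" "z \<in> carrier (pres_monoid Y S)"
  then obtain u v w where "u \<in> lists Y" "v \<in> lists Y" "w \<in> lists Y" "x = pres_class Y S u" "y = pres_class Y S v"
     "z = pres_class Y S w"
    by (auto simp: pres_carrier)
  then show "x \<otimes>\<^bsub>pres_monoid Y S\<^esub> y \<otimes>\<^bsub>pres_monoid Y S\<^esub> z = x \<otimes>\<^bsub>pres_monoid Y S\<^esub> (y \<otimes>\<^bsub>pres_monoid Y S\<^esub> z)"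
    by (simp add: pres_mult del: in_lists_conv_set)
next
  fix x assume "x \<in> carrier (pres_monoid Y S)"
  then obtain u where "u \<in> lists Y" "x = pres_class Y S u"
    by (auto simp: pres_carrier)
  then show "\<one>\<^bsub>pres_monoid Y S\<^esub> \<otimes>\<^bsub>pres_monoid Y S\<^esub> x = x"
    "x \<otimes>\<^bsub>pres_monoid Y S\<^esub> \<one>\<^bsub>pres_monoid Y S\<^esub> = x"
    using pres_mult[of "[]" Y u S] pres_mult[of u Y "[]" S] by (auto simp: pres_one)
qed

lemma pres_monoid_group:
  assumes "\<And>y. y \<in> Y \<Longrightarrow> \<exists>z\<in>lists Y. pres_eq Y S (z @ [y]) []"
  shows "group (pres_monoid Y S)"
proof -
  have inv: "\<exists>z\<in>lists Y. pres_eq Y S (z @ w) []" if "w \<in> lists Y" for w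
    using that
  proof (induction w)
    case Nil then show ?case by (auto intro: pres_eq.pe_refl)
  next
    case (Cons y w)
    then obtain z where z: "z \<in> lists Y" "pres_eq Y S (z @ w) []" by auto
    have "y \<in> Y" using Cons by auto
    then obtain z' where z': "z' \<in> lists Y" "pres_eq Y S (z' @ [y]) []" using assms[of y] by auto
    have "pres_eq Y S (z @ (z' @ [y]) @ w) (z @ [] @ w)"
      by (rule pres_eq_cong) (use z z' Cons in auto)
    then have "pres_eq Y S ((z @ z') @ y # w) []" using z by (auto intro: pres_eq.pe_trans)
    then show ?case using z z' by (intro bexI[of _ "z @ z'"]) auto
  qed
  show ?thesis
  proof (rule monoid.group_l_invI[OF pres_monoid_monoid])
    fix x assume "x \<in> carrier (pres_monoid Y S)"
    then obtain w where w: "w \<in> lists Y" "x = pres_class Y S w" by (auto simp: pres_carrier)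
    obtain z where "z \<in> lists Y" "pres_eq Y S (z @ w) []" using inv[OF w(1)] by auto
    then show "\<exists>y\<in>carrier (pres_monoid Y S). y \<otimes>\<^bsub>pres_monoid Y S\<^esub> x = \<one>\<^bsub>pres_monoid Y S\<^esub>"
      using w by (auto simp: pres_carrier pres_mult pres_one pres_class_eq_iff intro!: bexI[of _ "pres_class Y S z"])
  qed
qed


definition LXp :: "'i \<times> bool \<Rightarrow> ('a, 'i) gletter" where "LXp x = LX (fst x) (snd x)"

fun mul :: "('a, 'm) monoid_scheme \<Rightarrow> ('i::linorder \<Rightarrow> bool \<Rightarrow> 'i \<Rightarrow> bool \<Rightarrow> 'a) \<Rightarrow> ('i \<Rightarrow> bool \<Rightarrow> 'a \<Rightarrow> 'a)
   \<Rightarrow> ('i \<times> bool) list \<Rightarrow> 'i \<Rightarrow> bool \<Rightarrow> ('i \<times> bool) list \<times> 'a" where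
  "mul A f psi [] r g = ([(r, g)], \<one>\<^bsub>A\<^esub>)"
| "mul A f psi ((p, e) # w) r g =
    (if r < p then ((p, e) # fst (mul A f psi w r g), psi p e (snd (mul A f psi w r g)) \<otimes>\<^bsub>A\<^esub> f p e r g)
     else if p = r \<and> e = (\<not> g) then (w, \<one>\<^bsub>A\<^esub>) else ((r, g) # (p, e) # w, \<one>\<^bsub>A\<^esub>))"

definition nfw :: "'i::linorder set \<Rightarrow> ('i \<times> bool) list \<Rightarrow> bool" where
  "nfw I w \<longleftrightarrow> set w \<subseteq> I \<times> UNIV \<and> sorted_wrt (\<lambda>x y. fst y \<le> fst x \<and> (fst x = fst y \<longrightarrow> x = y)) w"

definition word :: "('a, 'm) monoid_scheme \<Rightarrow> ('i \<times> bool) list \<Rightarrow> 'a \<Rightarrow> ('a, 'i) gletter list" where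
  "word A v a = map LXp (rev v) @ aword A a"

fun act_l :: "('a, 'm) monoid_scheme \<Rightarrow> ('i::linorder \<Rightarrow> bool \<Rightarrow> 'i \<Rightarrow> bool \<Rightarrow> 'a) \<Rightarrow> ('i \<Rightarrow> bool \<Rightarrow> 'a \<Rightarrow> 'a)
   \<Rightarrow> ('a, 'i) gletter \<Rightarrow> ('i \<times> bool) list \<times> 'a \<Rightarrow> ('i \<times> bool) list \<times> 'a" where
  "act_l A f psi (LA b) (v, a) = (v, a \<otimes>\<^bsub>A\<^esub> b)"
| "act_l A f psi (LX r g) (v, a) = (fst (mul A f psi v r g), snd (mul A f psi v r g) \<otimes>\<^bsub>A\<^esub> psi r g a)"

definition act :: "('a, 'm) monoid_scheme \<Rightarrow> ('i::linorder \<Rightarrow> bool \<Rightarrow> 'i \<Rightarrow> bool \<Rightarrow> 'a) \<Rightarrow> ('i \<Rightarrow> bool \<Rightarrow> 'a \<Rightarrow> 'a)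
   \<Rightarrow> ('a, 'i) gletter list \<Rightarrow> ('i \<times> bool) list \<times> 'a \<Rightarrow> ('i \<times> bool) list \<times> 'a" where
  "act A f psi w s = fold (act_l A f psi) w s"



lemma nfw_Cons: "nfw I (x # w) \<longleftrightarrow> x \<in> I \<times> UNIV \<and> nfw I w \<and> (\<forall>y\<in>set w. fst y \<le> fst x \<and> (fst x = fst y \<longrightarrow> x = y))"
  by (auto simp: nfw_def)

lemma nfw_Nil [simp]: "nfw I []" by (simp add: nfw_def)

lemma mul_append:
  assumes "\<forall>x\<in>set v. fst x < p \<or> x = (p, e)"
  shows "mul A f psi v p e = ((p, e) # v, \<one>\<^bsub>A\<^esub>)"
  using assms by (cases v) auto

lemma mul_set: "set (fst (mul A f psi w r g)) \<subseteq> insert (r, g) (set w)"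
  by (induction w) (auto split: if_splits)

locale ext_data =
  fixes A :: "('a, 'm) monoid_scheme" and I :: "'i::linorder set"
    and f :: "'i \<Rightarrow> bool \<Rightarrow> 'i \<Rightarrow> bool \<Rightarrow> 'a" and psi :: "'i \<Rightarrow> bool \<Rightarrow> 'a \<Rightarrow> 'a"
  assumes grp: "group A"
    and f_car: "\<And>p q e d. p \<in> I \<Longrightarrow> q \<in> I \<Longrightarrow> p > q \<Longrightarrow> f p e q d \<in> carrier A"
    and psi_iso: "\<And>p e. p \<in> I \<Longrightarrow> psi p e \<in> iso A A"
begin

interpretation A: group A by (rule grp)

abbreviation "Y \<equiv> G_gens A I"
abbreviation "S \<equiv> G_rels A I f psi"
abbreviation "PE \<equiv> pres_eq Y S"

lemma psi_car: "p \<in> I \<Longrightarrow> a \<in> carrier A \<Longrightarrow> psi p e a \<in> carrier A"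
  by (meson hom_in_carrier iso_imp_homomorphism psi_iso)

lemma psi_mult: "p \<in> I \<Longrightarrow> a \<in> carrier A \<Longrightarrow> b \<in> carrier A \<Longrightarrow> psi p e (a \<otimes>\<^bsub>A\<^esub> b) = psi p e a \<otimes>\<^bsub>A\<^esub> psi p e b"
  by (meson hom_mult iso_imp_homomorphism psi_iso)

lemma psi_one: "p \<in> I \<Longrightarrow> psi p e \<one>\<^bsub>A\<^esub> = \<one>\<^bsub>A\<^esub>"
  by (meson grp hom_one iso_imp_homomorphism psi_iso)

lemma psi_eq_one: "p \<in> I \<Longrightarrow> a \<in> carrier A \<Longrightarrow> psi p e a = \<one>\<^bsub>A\<^esub> \<longleftrightarrow> a = \<one>\<^bsub>A\<^esub>"
proof -
  assume p: "p \<in> I" and a: "a \<in> carrier A"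
  have "inj_on (psi p e) (carrier A)" using psi_iso[OF p] by (simp add: iso_iff)
  then show ?thesis using p a psi_one[OF p] by (metis inj_onD A.one_closed)
qed

lemma mul_car: "set w \<subseteq> I \<times> UNIV \<Longrightarrow> r \<in> I \<Longrightarrow> snd (mul A f psi w r g) \<in> carrier A"
proof (induction w)
  case Nil then show ?case by simp
next
  case (Cons x w)
  obtain p e where x: "x = (p, e)" by (cases x)
  then have "p \<in> I" "set w \<subseteq> I \<times> UNIV" using Cons.prems by auto
  then show ?case using Cons x by (simp add: f_car psi_car)
qed

lemma mul_nfw: "nfw I w \<Longrightarrow> r \<in> I \<Longrightarrow> nfw I (fst (mul A f psi w r g))"
proof (induction w)
  case Nil then show ?case by (simp add: nfw_Cons)
next
  case (Cons x w)
  obtain p e where x: "x = (p, e)" by (cases x)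
  show ?case
  proof (cases "r < p")
    case True
    have "nfw I (fst (mul A f psi w r g))" using Cons by (simp add: nfw_Cons)
    moreover have "set (fst (mul A f psi w r g)) \<subseteq> insert (r, g) (set w)" by (rule mul_set)
    ultimately show ?thesis using Cons.prems True x by (auto simp: nfw_Cons)
  next
    case False
    show ?thesis
    proof (cases "p = r \<and> e = (\<not> g)")
      case True then show ?thesis using Cons.prems x \<open>\<not> r < p\<close> by (simp add: nfw_Cons)
    next
      case c: False
      have pe: "p \<le> r" "p = r \<longrightarrow> e = g" using False c by auto
      have w: "\<forall>y\<in>set w. fst y \<le> p \<and> (p = fst y \<longrightarrow> (p, e) = y)" "nfw I w" "p \<in> I"
        using Cons.prems x by (auto simp: nfw_Cons)
      have "\<forall>y\<in>set ((p, e) # w). fst y \<le> r \<and> (r = fst y \<longrightarrow> (r, g) = y)"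
        using w pe by force
      then show ?thesis using Cons.prems x False c w by (simp add: nfw_Cons)
    qed
  qed
qed


end


context ext_data begin

interpretation A: group A by (rule grp)

lemma aword_lists: "a \<in> carrier A \<Longrightarrow> aword A a \<in> lists Y"
  by (auto simp: aword_def G_gens_def)

lemma LX_Y: "p \<in> I \<Longrightarrow> LX p e \<in> Y"
  by (auto simp: G_gens_def)

lemma LA_Y: "a \<in> carrier A \<Longrightarrow> a \<noteq> \<one>\<^bsub>A\<^esub> \<Longrightarrow> LA a \<in> Y"
  by (auto simp: G_gens_def)

lemma LXp_lists: "set v \<subseteq> I \<times> UNIV \<Longrightarrow> map LXp v \<in> lists Y"
  by (auto simp: LXp_def G_gens_def in_lists_conv_set)

lemma word_lists: "set v \<subseteq> I \<times> UNIV \<Longrightarrow> a \<in> carrier A \<Longrightarrow> word A v a \<in> lists Y"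
  unfolding word_def using LXp_lists[of "rev v"] aword_lists[of a] by simp

lemma aword_mult:
  assumes a: "a \<in> carrier A" and b: "b \<in> carrier A"
  shows "PE (aword A a @ aword A b) (aword A (a \<otimes>\<^bsub>A\<^esub> b))"
proof -
  consider "a = \<one>\<^bsub>A\<^esub>" | "b = \<one>\<^bsub>A\<^esub>" | "a \<noteq> \<one>\<^bsub>A\<^esub>" "b \<noteq> \<one>\<^bsub>A\<^esub>" by blast
  then show ?thesis
  proof cases
    case 1 then show ?thesis using a b aword_lists[of b] by (simp add: aword_def[of A "\<one>\<^bsub>A\<^esub>"] pres_eq.pe_refl)
  next
    case 2 then show ?thesis using a b aword_lists[of a] by (simp add: aword_def[of A "\<one>\<^bsub>A\<^esub>"] pres_eq.pe_refl)
  next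
    case 3
    have r: "([LA a, LA b], aword A (a \<otimes>\<^bsub>A\<^esub> b)) \<in> S"
      unfolding G_rels_def using 3 a b by blast
    have l: "[LA a, LA b] \<in> lists Y" using 3 a b LA_Y by simp
    show ?thesis using 3 pres_eq_rel1[OF r l aword_lists[of "a \<otimes>\<^bsub>A\<^esub> b"]] a b
      by (simp add: aword_def[of A a] aword_def[of A b])
  qed
qed

lemma aword_LX:
  assumes a: "a \<in> carrier A" and p: "p \<in> I"
  shows "PE (aword A a @ [LX p e]) (LX p e # aword A (psi p e a))"
proof (cases "a = \<one>\<^bsub>A\<^esub>")
  case True then show ?thesis using p LX_Y[OF p]
    by (simp add: aword_def[of A "\<one>\<^bsub>A\<^esub>"] psi_one pres_eq.pe_refl)
next
  case False
  have r: "([LA a, LX p e], LX p e # aword A (psi p e a)) \<in> S"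
    unfolding G_rels_def using False a p by blast
  have l1: "[LA a, LX p e] \<in> lists Y" using False a LA_Y LX_Y[OF p] by simp
  have l2: "LX p e # aword A (psi p e a) \<in> lists Y" using aword_lists[OF psi_car[OF p a]] LX_Y[OF p] by simp
  show ?thesis using False pres_eq_rel1[OF r l1 l2] by (simp add: aword_def[of A a])
qed

end


context ext_data begin

interpretation A: group A by (rule grp)

lemma LXp_simp [simp]: "LXp (p, e) = LX p e" by (simp add: LXp_def)

lemma PE_trans: "PE u v \<Longrightarrow> PE v w \<Longrightarrow> PE u w" by (rule pres_eq.pe_trans)

lemma PE_cong: "PE u v \<Longrightarrow> w1 \<in> lists Y \<Longrightarrow> w2 \<in> lists Y \<Longrightarrow> PE (w1 @ u @ w2) (w1 @ v @ w2)"
  by (rule pres_eq_cong)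

lemma PE_app: "PE u v \<Longrightarrow> PE u' v' \<Longrightarrow> PE (u @ u') (v @ v')"
  by (rule pres_eq_append)

lemma PE_refl: "w \<in> lists Y \<Longrightarrow> PE w w" by (rule pres_eq.pe_refl)

lemma mul_word:
  assumes "set v \<subseteq> I \<times> UNIV" "r \<in> I"
  shows "PE (map LXp (rev v) @ [LX r g])
            (map LXp (rev (fst (mul A f psi v r g))) @ aword A (snd (mul A f psi v r g)))"
  using assms
proof (induction v)
  case Nil then show ?case using LX_Y[of r g] by (simp add: aword_def PE_refl LXp_simp)
next
  case (Cons x w)
  obtain p e where x: "x = (p, e)" by (cases x)
  have p: "p \<in> I" and wI: "set w \<subseteq> I \<times> UNIV" using Cons.prems x by auto
  have lw: "map LXp (rev w) \<in> lists Y" using LXp_lists[of "rev w"] wI by simp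
  show ?case
  proof (cases "r < p")
    case True
    define w1 where "w1 = fst (mul A f psi w r g)"
    define z where "z = snd (mul A f psi w r g)"
    have z: "z \<in> carrier A" unfolding z_def using mul_car[OF wI Cons.prems(2)] .
    have w1I: "set w1 \<subseteq> I \<times> UNIV" unfolding w1_def using mul_set[of A f psi w r g] wI Cons.prems(2) by auto
    have lw1: "map LXp (rev w1) \<in> lists Y" using LXp_lists[of "rev w1"] w1I by simp
    have fz: "f p e r g \<in> carrier A" using f_car[OF p Cons.prems(2) True] .
    have r1: "([LX p e, LX r g], [LX r g, LX p e] @ aword A (f p e r g)) \<in> S"
      unfolding G_rels_def using p Cons.prems(2) True by blast
    have s1: "PE [LX p e, LX r g] ([LX r g, LX p e] @ aword A (f p e r g))"
      by (rule pres_eq_rel1[OF r1]) (use LX_Y p Cons.prems(2) aword_lists[OF fz] in auto)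
    have s1': "PE (map LXp (rev w) @ [LX p e, LX r g] @ [])
                  (map LXp (rev w) @ ([LX r g, LX p e] @ aword A (f p e r g)) @ [])"
      by (rule PE_cong[OF s1 lw]) simp
    have s2: "PE ((map LXp (rev w) @ [LX r g]) @ ([LX p e] @ aword A (f p e r g)))
                 ((map LXp (rev w1) @ aword A z) @ ([LX p e] @ aword A (f p e r g)))"
      apply (rule PE_app)
      using Cons.IH[OF wI Cons.prems(2)] unfolding w1_def z_def apply simp
      apply (rule PE_refl) using LX_Y[OF p] aword_lists[OF fz] by simp
    have s3: "PE (map LXp (rev w1) @ (aword A z @ [LX p e]) @ aword A (f p e r g))
                 (map LXp (rev w1) @ (LX p e # aword A (psi p e z)) @ aword A (f p e r g))"
      by (rule PE_cong[OF aword_LX[OF z p] lw1 aword_lists[OF fz]])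
    have s4: "PE ((map LXp (rev w1) @ [LX p e]) @ (aword A (psi p e z) @ aword A (f p e r g)) @ [])
                 ((map LXp (rev w1) @ [LX p e]) @ aword A (psi p e z \<otimes>\<^bsub>A\<^esub> f p e r g) @ [])"
      by (rule PE_cong[OF aword_mult[OF psi_car[OF p z] fz]]) (use lw1 LX_Y[OF p] in auto)
    have "PE (map LXp (rev w) @ [LX p e, LX r g])
             ((map LXp (rev w1) @ [LX p e]) @ aword A (psi p e z \<otimes>\<^bsub>A\<^esub> f p e r g))"
      using PE_trans[OF s1'[simplified] PE_trans[OF s2[simplified] PE_trans[OF s3[simplified] s4[simplified]]]]
      by simp
    then show ?thesis using True x by (simp add: w1_def z_def LXp_simp)
  next
    case False
    show ?thesis
    proof (cases "p = r \<and> e = (\<not> g)")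
      case True
      have r1: "([LX r (\<not> g), LX r (\<not> \<not> g)], []) \<in> S"
        unfolding G_rels_def using Cons.prems(2) by blast
      have s1: "PE [LX r (\<not> g), LX r g] []"
        using pres_eq_rel1[OF r1] LX_Y Cons.prems(2) by simp
      have "PE (map LXp (rev w) @ [LX r (\<not> g), LX r g] @ []) (map LXp (rev w) @ [] @ [])"
        by (rule PE_cong[OF s1 lw]) simp
      then show ?thesis using True False x by (simp add: LXp_simp aword_def)
    next
      case c: False
      have "map LXp (rev w) @ [LX p e, LX r g] \<in> lists Y" using lw LX_Y p Cons.prems(2) by simp
      then show ?thesis using c False x by (auto simp: aword_def PE_refl)
    qed
  qed
qed

definition nfs :: "('i \<times> bool) list \<times> 'a \<Rightarrow> bool" where
  "nfs s \<longleftrightarrow> nfw I (fst s) \<and> snd s \<in> carrier A"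

lemma nfw_I: "nfw I v \<Longrightarrow> set v \<subseteq> I \<times> UNIV" by (simp add: nfw_def)

lemma act_l_nfs: "nfs s \<Longrightarrow> l \<in> Y \<Longrightarrow> nfs (act_l A f psi l s)"
proof -
  assume s: "nfs s" and l: "l \<in> Y"
  obtain v a where sv: "s = (v, a)" by (cases s)
  show ?thesis
  proof (cases l)
    case (LA b)
    then have "b \<in> carrier A" using l by (auto simp: G_gens_def)
    then show ?thesis using s sv LA by (simp add: nfs_def)
  next
    case (LX r g)
    then have r: "r \<in> I" using l by (auto simp: G_gens_def)
    then show ?thesis using s sv LX mul_nfw[of v r g] mul_car[of v r g] nfw_I psi_car
      by (simp add: nfs_def)
  qed
qed

lemma act_Nil [simp]: "act A f psi [] s = s" by (simp add: act_def)
lemma act_Cons [simp]: "act A f psi (l # w) s = act A f psi w (act_l A f psi l s)" by (simp add: act_def)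
lemma act_append: "act A f psi (u @ w) s = act A f psi w (act A f psi u s)" by (simp add: act_def)

lemma act_nfs: "w \<in> lists Y \<Longrightarrow> nfs s \<Longrightarrow> nfs (act A f psi w s)"
  by (induction w arbitrary: s) (auto simp: act_l_nfs)

lemma act_l_word:
  assumes s: "nfs (v, a)" and l: "l \<in> Y"
  shows "PE (word A v a @ [l]) (word A (fst (act_l A f psi l (v, a))) (snd (act_l A f psi l (v, a))))"
proof -
  have vI: "set v \<subseteq> I \<times> UNIV" and a: "a \<in> carrier A" using s by (auto simp: nfs_def nfw_def)
  have lv: "map LXp (rev v) \<in> lists Y" using LXp_lists[of "rev v"] vI by simp
  show ?thesis
  proof (cases l)
    case (LA b)
    then have b: "b \<in> carrier A" "b \<noteq> \<one>\<^bsub>A\<^esub>" using l by (auto simp: G_gens_def)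
    have "PE (map LXp (rev v) @ (aword A a @ aword A b) @ []) (map LXp (rev v) @ aword A (a \<otimes>\<^bsub>A\<^esub> b) @ [])"
      by (rule PE_cong[OF aword_mult[OF a b(1)] lv]) simp
    then show ?thesis using LA b by (simp add: word_def aword_def[of A b])
  next
    case (LX r g)
    then have r: "r \<in> I" using l by (auto simp: G_gens_def)
    define v' where "v' = fst (mul A f psi v r g)"
    define z where "z = snd (mul A f psi v r g)"
    have z: "z \<in> carrier A" unfolding z_def using mul_car[OF vI r] .
    have pa: "psi r g a \<in> carrier A" using psi_car[OF r a] .
    have s1: "PE (map LXp (rev v) @ (aword A a @ [LX r g]) @ [])
                 (map LXp (rev v) @ (LX r g # aword A (psi r g a)) @ [])"
      by (rule PE_cong[OF aword_LX[OF a r] lv]) simp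
    have m: "PE (map LXp (rev v) @ [LX r g]) (map LXp (rev v') @ aword A z)"
      unfolding v'_def z_def by (rule mul_word[OF vI r])
    have s2: "PE ((map LXp (rev v) @ [LX r g]) @ aword A (psi r g a))
                 ((map LXp (rev v') @ aword A z) @ aword A (psi r g a))"
      by (rule PE_app[OF m PE_refl[OF aword_lists[OF pa]]])
    have v'I: "set v' \<subseteq> I \<times> UNIV" unfolding v'_def using mul_set[of A f psi v r g] vI r by auto
    have s3: "PE (map LXp (rev v') @ (aword A z @ aword A (psi r g a)) @ [])
                 (map LXp (rev v') @ aword A (z \<otimes>\<^bsub>A\<^esub> psi r g a) @ [])"
      by (rule PE_cong[OF aword_mult[OF z pa]]) (use LXp_lists[of "rev v'"] v'I in auto)
    show ?thesis using PE_trans[OF s1[simplified] PE_trans[OF s2[simplified] s3[simplified]]] LX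
      by (simp add: word_def v'_def z_def)
  qed
qed

lemma act_word:
  "w \<in> lists Y \<Longrightarrow> nfs s \<Longrightarrow> PE (word A (fst s) (snd s) @ w) (word A (fst (act A f psi w s)) (snd (act A f psi w s)))"
proof (induction w arbitrary: s)
  case Nil
  then show ?case using word_lists[of "fst s" "snd s"] by (simp add: nfs_def nfw_def PE_refl)
next
  case (Cons l w)
  obtain v a where sv: "s = (v, a)" by (cases s)
  have l: "l \<in> Y" and w: "w \<in> lists Y" using Cons.prems by auto
  have s1: "PE ((word A v a @ [l]) @ w) (word A (fst (act_l A f psi l (v, a))) (snd (act_l A f psi l (v, a))) @ w)"
    by (rule PE_app[OF act_l_word[OF Cons.prems(2)[unfolded sv] l] PE_refl[OF w]])
  have "nfs (act_l A f psi l (v, a))" using act_l_nfs Cons.prems sv l by simp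
  then have s2: "PE (word A (fst (act_l A f psi l (v, a))) (snd (act_l A f psi l (v, a))) @ w)
      (word A (fst (act A f psi w (act_l A f psi l (v, a)))) (snd (act A f psi w (act_l A f psi l (v, a)))))"
    using Cons.IH[OF w] by (metis prod.collapse)
  show ?case using PE_trans[OF s1 s2] sv by simp
qed

lemma nfs_init: "nfs ([], \<one>\<^bsub>A\<^esub>)" by (simp add: nfs_def)

lemma normal_form:
  assumes "w \<in> lists Y"
  shows "PE w (word A (fst (act A f psi w ([], \<one>\<^bsub>A\<^esub>))) (snd (act A f psi w ([], \<one>\<^bsub>A\<^esub>))))
       \<and> nfs (act A f psi w ([], \<one>\<^bsub>A\<^esub>))"
  using act_word[OF assms nfs_init] act_nfs[OF assms nfs_init] by (simp add: word_def aword_def)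

end


locale ext_cond = ext_data +
  assumes c1: "\<And>p q r e d g. p \<in> I \<Longrightarrow> q \<in> I \<Longrightarrow> r \<in> I \<Longrightarrow> p > q \<Longrightarrow> q > r \<Longrightarrow>
          f p e q d \<otimes>\<^bsub>A\<^esub> psi q d (f p e r g) \<otimes>\<^bsub>A\<^esub> f q d r g
          = psi p e (f q d r g) \<otimes>\<^bsub>A\<^esub> f p e r g \<otimes>\<^bsub>A\<^esub> psi r g (f p e q d)"
    and c2: "\<And>p q e d. p \<in> I \<Longrightarrow> q \<in> I \<Longrightarrow> p > q \<Longrightarrow>
          f p e q (\<not> d) \<otimes>\<^bsub>A\<^esub> psi q (\<not> d) (f p e q d) = \<one>\<^bsub>A\<^esub>"
    and c3: "\<And>p q e d. p \<in> I \<Longrightarrow> q \<in> I \<Longrightarrow> p > q \<Longrightarrow>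
          psi p (\<not> e) (f p e q d) \<otimes>\<^bsub>A\<^esub> f p (\<not> e) q d = \<one>\<^bsub>A\<^esub>"
    and c4: "\<And>p q e d a. p \<in> I \<Longrightarrow> q \<in> I \<Longrightarrow> a \<in> carrier A \<Longrightarrow> p > q \<Longrightarrow>
          psi p e (psi q d a) \<otimes>\<^bsub>A\<^esub> f p e q d = f p e q d \<otimes>\<^bsub>A\<^esub> psi q d (psi p e a)"
    and c5: "\<And>r e a. r \<in> I \<Longrightarrow> a \<in> carrier A \<Longrightarrow> psi r (\<not> e) (psi r e a) = a"
begin

interpretation A: group A by (rule grp)

lemma c4':
  assumes "p \<in> I" "q \<in> I" "a \<in> carrier A" "p > q" "y \<in> carrier A"
  shows "f p e q d \<otimes>\<^bsub>A\<^esub> (psi q d (psi p e a) \<otimes>\<^bsub>A\<^esub> y) = psi p e (psi q d a) \<otimes>\<^bsub>A\<^esub> (f p e q d \<otimes>\<^bsub>A\<^esub> y)"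
proof -
  have *: "f p e q d \<in> carrier A" "psi p e a \<in> carrier A" "psi q d a \<in> carrier A"
    using assms f_car psi_car by auto
  have "f p e q d \<otimes>\<^bsub>A\<^esub> (psi q d (psi p e a) \<otimes>\<^bsub>A\<^esub> y) = (f p e q d \<otimes>\<^bsub>A\<^esub> psi q d (psi p e a)) \<otimes>\<^bsub>A\<^esub> y"
    using * assms psi_car by (simp add: A.m_assoc)
  also have "\<dots> = (psi p e (psi q d a) \<otimes>\<^bsub>A\<^esub> f p e q d) \<otimes>\<^bsub>A\<^esub> y" using c4[OF assms(1-4)] by simp
  also have "\<dots> = psi p e (psi q d a) \<otimes>\<^bsub>A\<^esub> (f p e q d \<otimes>\<^bsub>A\<^esub> y)"
    using * assms psi_car by (simp add: A.m_assoc)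
  finally show ?thesis .
qed

lemma nfw_all: "nfw I ((r, g) # u) \<Longrightarrow> (r < p \<or> (r = p \<and> g = e)) \<Longrightarrow> \<forall>x\<in>set ((r, g) # u). fst x < p \<or> x = (p, e)"
  by (auto simp: nfw_Cons)

lemma commute:
  assumes "nfw I w" "p \<in> I" "q \<in> I" "q < p"
  shows "fst (mul A f psi (fst (mul A f psi w p e)) q d) = fst (mul A f psi (fst (mul A f psi w q d)) p e)
    \<and> snd (mul A f psi (fst (mul A f psi w p e)) q d) \<otimes>\<^bsub>A\<^esub> psi q d (snd (mul A f psi w p e))
      = snd (mul A f psi (fst (mul A f psi w q d)) p e) \<otimes>\<^bsub>A\<^esub> psi p e (snd (mul A f psi w q d)) \<otimes>\<^bsub>A\<^esub> f p e q d"
  using assms(1)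
proof (induction w)
  case Nil
  have fpq: "f p e q d \<in> carrier A" using f_car assms by auto
  have np: "\<not> p < q" "q \<noteq> p" using assms(4) by auto
  have m1: "mul A f psi [(p, e)] q d = ([(p, e), (q, d)], psi p e \<one>\<^bsub>A\<^esub> \<otimes>\<^bsub>A\<^esub> f p e q d)"
    using assms(4) by simp
  have m2: "mul A f psi [(q, d)] p e = ([(p, e), (q, d)], \<one>\<^bsub>A\<^esub>)"
    using np by simp
  show ?case using assms fpq m1 m2 psi_one[of p e] psi_one[of q d] by simp
next
  case (Cons x u)
  obtain r g where x: "x = (r, g)" by (cases x)
  have r: "r \<in> I" and uI: "nfw I u" and uI': "set u \<subseteq> I \<times> UNIV" using Cons.prems x by (auto simp: nfw_Cons nfw_def)
  have fpq: "f p e q d \<in> carrier A" using f_car assms by auto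
  consider "p < r" | "r < p \<or> (r = p \<and> g = e)" | "r = p" "g = (\<not> e)" by fastforce
  then show ?case
  proof cases
    case 1
    have qr: "q < r" using 1 assms by simp
    define u1 where "u1 = fst (mul A f psi u p e)"
    define z1 where "z1 = snd (mul A f psi u p e)"
    define u2 where "u2 = fst (mul A f psi u1 q d)"
    define z2 where "z2 = snd (mul A f psi u1 q d)"
    define v1 where "v1 = fst (mul A f psi u q d)"
    define y1 where "y1 = snd (mul A f psi u q d)"
    define v2 where "v2 = fst (mul A f psi v1 p e)"
    define y2 where "y2 = snd (mul A f psi v1 p e)"
    have IH: "u2 = v2" "z2 \<otimes>\<^bsub>A\<^esub> psi q d z1 = y2 \<otimes>\<^bsub>A\<^esub> psi p e y1 \<otimes>\<^bsub>A\<^esub> f p e q d"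
      using Cons.IH[OF uI] unfolding u1_def z1_def u2_def z2_def v1_def y1_def v2_def y2_def by auto
    have u1I: "set u1 \<subseteq> I \<times> UNIV" unfolding u1_def using mul_set[of A f psi u p e] uI' assms by auto
    have v1I: "set v1 \<subseteq> I \<times> UNIV" unfolding v1_def using mul_set[of A f psi u q d] uI' assms by auto
    have car: "z1 \<in> carrier A" "z2 \<in> carrier A" "y1 \<in> carrier A" "y2 \<in> carrier A"
      unfolding z1_def z2_def y1_def y2_def using mul_car uI' u1I v1I assms by auto
    have fcar: "f r g p e \<in> carrier A" "f r g q d \<in> carrier A" using f_car r assms 1 qr by auto
    define L where "L = (psi r g z2 \<otimes>\<^bsub>A\<^esub> f r g q d) \<otimes>\<^bsub>A\<^esub> psi q d (psi r g z1 \<otimes>\<^bsub>A\<^esub> f r g p e)"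
    define R where "R = (psi r g y2 \<otimes>\<^bsub>A\<^esub> f r g p e) \<otimes>\<^bsub>A\<^esub> psi p e (psi r g y1 \<otimes>\<^bsub>A\<^esub> f r g q d) \<otimes>\<^bsub>A\<^esub> f p e q d"
    have pc: "\<And>s t a. s \<in> I \<Longrightarrow> a \<in> carrier A \<Longrightarrow> psi s t a \<in> carrier A" using psi_car by blast
    have "L = psi r g z2 \<otimes>\<^bsub>A\<^esub> (f r g q d \<otimes>\<^bsub>A\<^esub> (psi q d (psi r g z1) \<otimes>\<^bsub>A\<^esub> psi q d (f r g p e)))"
      unfolding L_def using car fcar r assms by (simp add: psi_mult pc A.m_assoc)
    also have "\<dots> = psi r g z2 \<otimes>\<^bsub>A\<^esub> (psi r g (psi q d z1) \<otimes>\<^bsub>A\<^esub> (f r g q d \<otimes>\<^bsub>A\<^esub> psi q d (f r g p e)))"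
      using c4'[where p=r and q=q and a=z1 and y="psi q d (f r g p e)" and e=g and d=d] car fcar r assms qr pc by simp
    also have "\<dots> = psi r g (z2 \<otimes>\<^bsub>A\<^esub> psi q d z1) \<otimes>\<^bsub>A\<^esub> (f r g q d \<otimes>\<^bsub>A\<^esub> psi q d (f r g p e))"
      using car fcar r assms pc by (simp add: psi_mult A.m_assoc)
    also have "\<dots> = psi r g (y2 \<otimes>\<^bsub>A\<^esub> psi p e y1 \<otimes>\<^bsub>A\<^esub> f p e q d) \<otimes>\<^bsub>A\<^esub> (f r g q d \<otimes>\<^bsub>A\<^esub> psi q d (f r g p e))"
      using IH by simp
    also have "\<dots> = psi r g y2 \<otimes>\<^bsub>A\<^esub> (psi r g (psi p e y1) \<otimes>\<^bsub>A\<^esub> (psi r g (f p e q d) \<otimes>\<^bsub>A\<^esub> f r g q d \<otimes>\<^bsub>A\<^esub> psi q d (f r g p e)))"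
      using car fcar fpq r assms pc by (simp add: psi_mult A.m_assoc)
    also have "\<dots> = psi r g y2 \<otimes>\<^bsub>A\<^esub> (psi r g (psi p e y1) \<otimes>\<^bsub>A\<^esub> (f r g p e \<otimes>\<^bsub>A\<^esub> psi p e (f r g q d) \<otimes>\<^bsub>A\<^esub> f p e q d))"
      using c1[where p=r and q=p and r=q and e=g and d=e and g=d] r assms 1 by simp
    also have "\<dots> = psi r g y2 \<otimes>\<^bsub>A\<^esub> (f r g p e \<otimes>\<^bsub>A\<^esub> (psi p e (psi r g y1) \<otimes>\<^bsub>A\<^esub> (psi p e (f r g q d) \<otimes>\<^bsub>A\<^esub> f p e q d)))"
      using c4'[where p=r and q=p and a=y1 and y="psi p e (f r g q d) \<otimes>\<^bsub>A\<^esub> f p e q d" and e=g and d=e] car fcar fpq r assms 1 pc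
      by (simp add: A.m_assoc)
    also have "\<dots> = R"
      unfolding R_def using car fcar fpq r assms pc by (simp add: psi_mult A.m_assoc)
    finally have LR: "L = R" .
    show ?thesis using 1 qr x IH(1) LR
      unfolding L_def R_def u1_def z1_def u2_def z2_def v1_def y1_def v2_def y2_def by simp
  next
    case 2
    define w where "w = x # u"
    have all: "\<forall>y\<in>set w. fst y < p \<or> y = (p, e)" unfolding w_def x using nfw_all[OF Cons.prems[unfolded x] 2] .
    have m1: "mul A f psi w p e = ((p, e) # w, \<one>\<^bsub>A\<^esub>)" by (rule mul_append[OF all])
    define v1 where "v1 = fst (mul A f psi w q d)"
    define y1 where "y1 = snd (mul A f psi w q d)"
    have m0: "mul A f psi w q d = (v1, y1)" unfolding v1_def y1_def by simp
    have "set v1 \<subseteq> insert (q, d) (set w)" unfolding v1_def by (rule mul_set)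
    then have "\<forall>y\<in>set v1. fst y < p \<or> y = (p, e)" using all assms by auto
    then have m2: "mul A f psi v1 p e = ((p, e) # v1, \<one>\<^bsub>A\<^esub>)" by (rule mul_append)
    have m3: "mul A f psi ((p, e) # w) q d = ((p, e) # v1, psi p e y1 \<otimes>\<^bsub>A\<^esub> f p e q d)"
      using mul.simps(2)[of A f psi p e w q d] assms(4) m0 by simp
    have wI: "set w \<subseteq> I \<times> UNIV" unfolding w_def using Cons.prems by (simp add: nfw_def)
    have y1: "y1 \<in> carrier A" unfolding y1_def using mul_car[OF wI] assms by simp
    have "psi p e y1 \<in> carrier A" using psi_car y1 assms by simp
    then have "(psi p e y1 \<otimes>\<^bsub>A\<^esub> f p e q d) \<otimes>\<^bsub>A\<^esub> psi q d \<one>\<^bsub>A\<^esub> = \<one>\<^bsub>A\<^esub> \<otimes>\<^bsub>A\<^esub> psi p e y1 \<otimes>\<^bsub>A\<^esub> f p e q d"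
      using fpq psi_one assms by simp
    then show ?thesis unfolding w_def[symmetric] m1 fst_conv snd_conv m3 m0 m2 by simp
  next
    case 3
    define u1 where "u1 = fst (mul A f psi u q d)"
    define z1 where "z1 = snd (mul A f psi u q d)"
    have z1: "z1 \<in> carrier A" unfolding z1_def using mul_car uI' assms by auto
    have fcar: "f p (\<not> e) q d \<in> carrier A" using f_car assms by auto
    have "psi p e (psi p (\<not> e) z1 \<otimes>\<^bsub>A\<^esub> f p (\<not> e) q d) \<otimes>\<^bsub>A\<^esub> f p e q d
        = psi p e (psi p (\<not> e) z1) \<otimes>\<^bsub>A\<^esub> (psi p (\<not> \<not> e) (f p (\<not> e) q d) \<otimes>\<^bsub>A\<^esub> f p (\<not> \<not> e) q d)"
      using z1 fcar fpq assms psi_car by (simp add: psi_mult A.m_assoc)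
    also have "\<dots> = z1"
      using c3[where p=p and q=q and e="\<not> e" and d=d] c5[where r=p and e="\<not> e" and a=z1] assms z1 by simp
    finally have eq: "psi p e (psi p (\<not> e) z1 \<otimes>\<^bsub>A\<^esub> f p (\<not> e) q d) \<otimes>\<^bsub>A\<^esub> f p e q d = z1" .
    have pc2: "psi p e (psi p (\<not> e) z1 \<otimes>\<^bsub>A\<^esub> f p (\<not> e) q d) \<in> carrier A"
      using psi_car z1 fcar assms by simp
    show ?thesis using 3 x assms eq z1 psi_one pc2 fpq
      by (simp add: u1_def[symmetric] z1_def[symmetric])
  qed
qed

lemma cancel:
  assumes "nfw I w" "q \<in> I"
  shows "fst (mul A f psi (fst (mul A f psi w q e)) q (\<not> e)) = w
    \<and> snd (mul A f psi (fst (mul A f psi w q e)) q (\<not> e)) \<otimes>\<^bsub>A\<^esub> psi q (\<not> e) (snd (mul A f psi w q e)) = \<one>\<^bsub>A\<^esub>"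
  using assms(1)
proof (induction w)
  case Nil then show ?case using assms by (simp add: psi_one)
next
  case (Cons x u)
  obtain p e' where x: "x = (p, e')" by (cases x)
  have p: "p \<in> I" and uI: "nfw I u" and uI': "set u \<subseteq> I \<times> UNIV" using Cons.prems x by (auto simp: nfw_Cons nfw_def)
  consider "q < p" | "p < q" | "p = q" "e' = (\<not> e)" | "p = q" "e' = e" by fastforce
  then show ?case
  proof cases
    case 1
    define u1 where "u1 = fst (mul A f psi u q e)"
    define z1 where "z1 = snd (mul A f psi u q e)"
    define u2 where "u2 = fst (mul A f psi u1 q (\<not> e))"
    define z2 where "z2 = snd (mul A f psi u1 q (\<not> e))"
    have IH: "u2 = u" "z2 \<otimes>\<^bsub>A\<^esub> psi q (\<not> e) z1 = \<one>\<^bsub>A\<^esub>"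
      using Cons.IH[OF uI] unfolding u1_def z1_def u2_def z2_def by auto
    have u1I: "set u1 \<subseteq> I \<times> UNIV" unfolding u1_def using mul_set[of A f psi u q e] uI' assms by auto
    have car: "z1 \<in> carrier A" "z2 \<in> carrier A"
      unfolding z1_def z2_def using mul_car uI' u1I assms by auto
    have fcar: "f p e' q e \<in> carrier A" "f p e' q (\<not> e) \<in> carrier A" using f_car p assms 1 by auto
    have pc: "\<And>s t a. s \<in> I \<Longrightarrow> a \<in> carrier A \<Longrightarrow> psi s t a \<in> carrier A" using psi_car by blast
    have "(psi p e' z2 \<otimes>\<^bsub>A\<^esub> f p e' q (\<not> e)) \<otimes>\<^bsub>A\<^esub> psi q (\<not> e) (psi p e' z1 \<otimes>\<^bsub>A\<^esub> f p e' q e)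
       = psi p e' z2 \<otimes>\<^bsub>A\<^esub> (f p e' q (\<not> e) \<otimes>\<^bsub>A\<^esub> (psi q (\<not> e) (psi p e' z1) \<otimes>\<^bsub>A\<^esub> psi q (\<not> e) (f p e' q e)))"
      using car fcar p assms by (simp add: psi_mult pc A.m_assoc)
    also have "\<dots> = psi p e' z2 \<otimes>\<^bsub>A\<^esub> (psi p e' (psi q (\<not> e) z1) \<otimes>\<^bsub>A\<^esub> (f p e' q (\<not> e) \<otimes>\<^bsub>A\<^esub> psi q (\<not> e) (f p e' q e)))"
      using c4'[where p=p and q=q and a=z1 and y="psi q (\<not> e) (f p e' q e)" and e=e' and d="\<not> e"] car fcar p assms 1 pc by simp
    also have "\<dots> = psi p e' (z2 \<otimes>\<^bsub>A\<^esub> psi q (\<not> e) z1)"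
      using c2[where p=p and q=q and e=e' and d=e] car p assms 1 pc by (simp add: psi_mult A.m_assoc)
    also have "\<dots> = \<one>\<^bsub>A\<^esub>" using IH psi_one p by simp
    finally have eq: "(psi p e' z2 \<otimes>\<^bsub>A\<^esub> f p e' q (\<not> e)) \<otimes>\<^bsub>A\<^esub> psi q (\<not> e) (psi p e' z1 \<otimes>\<^bsub>A\<^esub> f p e' q e) = \<one>\<^bsub>A\<^esub>" .
    show ?thesis using 1 x IH(1) eq unfolding u1_def z1_def u2_def z2_def by simp
  next
    case 2
    have np: "\<not> q < p" "p \<noteq> q" using 2 by auto
    have m1: "mul A f psi ((p, e') # u) q e = ((q, e) # (p, e') # u, \<one>\<^bsub>A\<^esub>)" using np by simp
    have m2: "mul A f psi ((q, e) # (p, e') # u) q (\<not> e) = ((p, e') # u, \<one>\<^bsub>A\<^esub>)" by simp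
    show ?thesis using x m1 m2 assms psi_one[of q "\<not> e"] by simp
  next
    case 3
    have all: "\<forall>y\<in>set u. fst y < q \<or> y = (q, \<not> e)"
      using Cons.prems x 3 by (force simp: nfw_Cons)
    have m: "mul A f psi u q (\<not> e) = ((q, \<not> e) # u, \<one>\<^bsub>A\<^esub>)" by (rule mul_append[OF all])
    show ?thesis using 3 x m assms by (simp add: psi_one)
  next
    case 4 then show ?thesis using x assms by (simp add: psi_one)
  qed
qed

end


context ext_data begin
interpretation A: group A by (rule grp)

lemma act_aword: "a \<in> carrier A \<Longrightarrow> b \<in> carrier A \<Longrightarrow> act A f psi (aword A b) (v, a) = (v, a \<otimes>\<^bsub>A\<^esub> b)"
  by (simp add: aword_def)

end

context ext_cond begin
interpretation A: group A by (rule grp)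

lemma act_rel:
  assumes lr: "(l, r) \<in> S" and s: "nfs s"
  shows "act A f psi l s = act A f psi r s"
proof -
  obtain w a where sw: "s = (w, a)" by (cases s)
  have w: "nfw I w" and a: "a \<in> carrier A" using s sw by (auto simp: nfs_def)
  have wI: "set w \<subseteq> I \<times> UNIV" using w by (simp add: nfw_def)
  from lr consider
      (R1) b b' where "l = [LA b, LA b']" "r = aword A (b \<otimes>\<^bsub>A\<^esub> b')" "b \<in> carrier A" "b' \<in> carrier A"
    | (R2) b p e where "l = [LA b, LX p e]" "r = LX p e # aword A (psi p e b)" "b \<in> carrier A" "p \<in> I"
    | (R3) p q e d where "l = [LX p e, LX q d]" "r = [LX q d, LX p e] @ aword A (f p e q d)" "p \<in> I" "q \<in> I" "q < p"
    | (R4) q e where "l = [LX q e, LX q (\<not> e)]" "r = []" "q \<in> I"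
    unfolding G_rels_def by blast
  then show ?thesis
  proof cases
    case R1
    then show ?thesis using sw a by (simp add: act_aword A.m_assoc)
  next
    case R2
    have "psi p e b \<in> carrier A" using psi_car R2 by simp
    then show ?thesis using R2 sw a mul_car[OF wI R2(4)] psi_car
      by (simp add: act_aword A.m_assoc psi_mult)
  next
    case R3
    define w1 where "w1 = fst (mul A f psi w p e)"
    define z1 where "z1 = snd (mul A f psi w p e)"
    define w2 where "w2 = fst (mul A f psi w1 q d)"
    define z2 where "z2 = snd (mul A f psi w1 q d)"
    define v1 where "v1 = fst (mul A f psi w q d)"
    define y1 where "y1 = snd (mul A f psi w q d)"
    define v2 where "v2 = fst (mul A f psi v1 p e)"
    define y2 where "y2 = snd (mul A f psi v1 p e)"
    have C: "w2 = v2" "z2 \<otimes>\<^bsub>A\<^esub> psi q d z1 = y2 \<otimes>\<^bsub>A\<^esub> psi p e y1 \<otimes>\<^bsub>A\<^esub> f p e q d"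
      using commute[OF w R3(3) R3(4) R3(5), of e d]
      unfolding w1_def z1_def w2_def z2_def v1_def y1_def v2_def y2_def by auto
    have w1I: "set w1 \<subseteq> I \<times> UNIV" unfolding w1_def using mul_set[of A f psi w p e] wI R3 by auto
    have v1I: "set v1 \<subseteq> I \<times> UNIV" unfolding v1_def using mul_set[of A f psi w q d] wI R3 by auto
    have car: "z1 \<in> carrier A" "z2 \<in> carrier A" "y1 \<in> carrier A" "y2 \<in> carrier A"
      unfolding z1_def z2_def y1_def y2_def using mul_car wI w1I v1I R3 by auto
    have fc: "f p e q d \<in> carrier A" using f_car R3 by simp
    have pc: "\<And>s t x. s \<in> I \<Longrightarrow> x \<in> carrier A \<Longrightarrow> psi s t x \<in> carrier A" using psi_car by blast
    have L: "act A f psi l s = (w2, z2 \<otimes>\<^bsub>A\<^esub> psi q d (z1 \<otimes>\<^bsub>A\<^esub> psi p e a))"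
      using R3(1) sw unfolding w1_def z1_def w2_def z2_def by simp
    have R: "act A f psi r s = (v2, (y2 \<otimes>\<^bsub>A\<^esub> psi p e (y1 \<otimes>\<^bsub>A\<^esub> psi q d a)) \<otimes>\<^bsub>A\<^esub> f p e q d)"
    proof -
      have "act A f psi [LX q d, LX p e] s = (v2, y2 \<otimes>\<^bsub>A\<^esub> psi p e (y1 \<otimes>\<^bsub>A\<^esub> psi q d a))"
        using sw unfolding v1_def y1_def v2_def y2_def by simp
      moreover have "y2 \<otimes>\<^bsub>A\<^esub> psi p e (y1 \<otimes>\<^bsub>A\<^esub> psi q d a) \<in> carrier A" using car a pc R3 by simp
      ultimately show ?thesis using R3(2) fc by (simp add: act_append act_aword)
    qed
    have "z2 \<otimes>\<^bsub>A\<^esub> psi q d (z1 \<otimes>\<^bsub>A\<^esub> psi p e a) = (z2 \<otimes>\<^bsub>A\<^esub> psi q d z1) \<otimes>\<^bsub>A\<^esub> psi q d (psi p e a)"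
      using car a pc R3 by (simp add: psi_mult A.m_assoc)
    also have "\<dots> = y2 \<otimes>\<^bsub>A\<^esub> psi p e y1 \<otimes>\<^bsub>A\<^esub> (f p e q d \<otimes>\<^bsub>A\<^esub> psi q d (psi p e a))"
      using C car a pc R3 fc by (simp add: A.m_assoc)
    also have "\<dots> = y2 \<otimes>\<^bsub>A\<^esub> psi p e y1 \<otimes>\<^bsub>A\<^esub> (psi p e (psi q d a) \<otimes>\<^bsub>A\<^esub> f p e q d)"
      using c4[OF R3(3) R3(4) a R3(5), of e d] by simp
    also have "\<dots> = (y2 \<otimes>\<^bsub>A\<^esub> psi p e (y1 \<otimes>\<^bsub>A\<^esub> psi q d a)) \<otimes>\<^bsub>A\<^esub> f p e q d"
      using car a pc R3 fc by (simp add: psi_mult A.m_assoc)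
    finally show ?thesis using L R C(1) by simp
  next
    case R4
    define w1 where "w1 = fst (mul A f psi w q e)"
    define z1 where "z1 = snd (mul A f psi w q e)"
    define w2 where "w2 = fst (mul A f psi w1 q (\<not> e))"
    define z2 where "z2 = snd (mul A f psi w1 q (\<not> e))"
    have C: "w2 = w" "z2 \<otimes>\<^bsub>A\<^esub> psi q (\<not> e) z1 = \<one>\<^bsub>A\<^esub>"
      using cancel[OF w R4(3), of e] unfolding w1_def z1_def w2_def z2_def by auto
    have w1I: "set w1 \<subseteq> I \<times> UNIV" unfolding w1_def using mul_set[of A f psi w q e] wI R4 by auto
    have car: "z1 \<in> carrier A" "z2 \<in> carrier A"
      unfolding z1_def z2_def using mul_car wI w1I R4 by auto
    have pc: "\<And>s t x. s \<in> I \<Longrightarrow> x \<in> carrier A \<Longrightarrow> psi s t x \<in> carrier A" using psi_car by blast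
    have L: "act A f psi l s = (w2, z2 \<otimes>\<^bsub>A\<^esub> psi q (\<not> e) (z1 \<otimes>\<^bsub>A\<^esub> psi q e a))"
      using R4(1) sw unfolding w1_def z1_def w2_def z2_def by simp
    have "z2 \<otimes>\<^bsub>A\<^esub> psi q (\<not> e) (z1 \<otimes>\<^bsub>A\<^esub> psi q e a) = (z2 \<otimes>\<^bsub>A\<^esub> psi q (\<not> e) z1) \<otimes>\<^bsub>A\<^esub> psi q (\<not> e) (psi q e a)"
      using car a pc R4 by (simp add: psi_mult A.m_assoc)
    also have "\<dots> = a" using C c5[OF R4(3) a] a by simp
    finally show ?thesis using L C(1) R4(2) sw by simp
  qed
qed

lemma act_PE: "PE u v \<Longrightarrow> nfs s \<Longrightarrow> act A f psi u s = act A f psi v s"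
proof (induction arbitrary: s rule: pres_eq.induct)
  case (pe_refl w) then show ?case by simp
next
  case (pe_sym u v) then show ?case by simp
next
  case (pe_trans u v w) then show ?case by simp
next
  case (pe_rel l r w1 w2)
  have "nfs (act A f psi w1 s)" using act_nfs[OF pe_rel(4) pe_rel(6)] .
  then show ?case using act_rel[OF pe_rel(1)] by (simp add: act_append)
qed

lemma aword_inj:
  assumes "a \<in> carrier A" "b \<in> carrier A" "PE (aword A a) (aword A b)"
  shows "a = b"
proof -
  have "act A f psi (aword A a) ([], \<one>\<^bsub>A\<^esub>) = act A f psi (aword A b) ([], \<one>\<^bsub>A\<^esub>)"
    using act_PE[OF assms(3) nfs_init] .
  then show ?thesis using assms by (simp add: act_aword)
qed

end


abbreviation "PB I \<equiv> pres_eq (B_gens I) (B_rels I)"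

lemma B_group: "group (pres_monoid (B_gens I) (B_rels I))"
proof (rule pres_monoid_group)
  fix y assume y: "y \<in> B_gens I"
  obtain p e where ype: "y = (p, e)" and p: "p \<in> I" using y by (cases y) (auto simp: B_gens_def)
  have r: "([(p, \<not> e), (p, \<not> \<not> e)], []) \<in> B_rels I" unfolding B_rels_def using p by blast
  have "PB I [(p, \<not> e), (p, e)] []" using pres_eq_rel1[OF r] p by (simp add: B_gens_def)
  then show "\<exists>z\<in>lists (B_gens I). PB I (z @ [y]) []" using ype p
    by (intro bexI[of _ "[(p, \<not> e)]"]) (auto simp: B_gens_def)
qed

fun cnt :: "('i \<times> bool) list \<Rightarrow> 'i \<Rightarrow> int" where
  "cnt [] i = 0"
| "cnt (x # xs) i = (if fst x = i then (if snd x then 1 else -1) else 0) + cnt xs i"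

lemma cnt_append: "cnt (xs @ ys) i = cnt xs i + cnt ys i"
  by (induction xs) auto

lemma cnt_rev: "cnt (rev xs) i = cnt xs i"
  by (induction xs) (auto simp: cnt_append)

lemma cnt_PB: "PB I u v \<Longrightarrow> cnt u = cnt v"
proof (induction rule: pres_eq.induct)
  case (pe_rel l r w1 w2)
  have "cnt l = cnt r" using pe_rel(1) unfolding B_rels_def by (auto simp: fun_eq_iff)
  then show ?case by (simp add: fun_eq_iff cnt_append)
qed auto

lemma cnt_zero: "\<forall>y\<in>set u. fst y \<noteq> i \<Longrightarrow> cnt u i = 0"
  by (induction u) auto

lemma cnt_sign: "\<forall>y\<in>set u. fst y = p \<longrightarrow> y = (p, e) \<Longrightarrow> (if e then cnt u p \<ge> 0 else cnt u p \<le> 0)"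
  by (induction u) (auto split: if_splits)

lemma nfw_head:
  assumes "nfw I ((p, e) # u)"
  shows "\<forall>i. p < i \<longrightarrow> cnt ((p, e) # u) i = 0" "cnt ((p, e) # u) p \<noteq> 0" "0 < cnt ((p, e) # u) p \<longleftrightarrow> e"
proof -
  have h: "\<forall>y\<in>set u. fst y \<le> p \<and> (p = fst y \<longrightarrow> (p, e) = y)" using assms by (simp add: nfw_Cons)
  show "\<forall>i. p < i \<longrightarrow> cnt ((p, e) # u) i = 0"
    using h by (auto intro!: cnt_zero)
  have s: "if e then cnt u p \<ge> 0 else cnt u p \<le> 0" using h by (intro cnt_sign) auto
  then show "cnt ((p, e) # u) p \<noteq> 0" "0 < cnt ((p, e) # u) p \<longleftrightarrow> e"
    by (auto split: if_splits)
qed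

lemma nfw_cnt_unique: "nfw I v \<Longrightarrow> nfw I v' \<Longrightarrow> (\<And>i. cnt v i = cnt v' i) \<Longrightarrow> v = v'"
proof (induction v arbitrary: v')
  case Nil
  show ?case
  proof (cases v')
    case (Cons x u')
    obtain p e where "x = (p, e)" by (cases x)
    then show ?thesis using nfw_head(2)[of I p e u'] Nil Cons by (metis cnt.simps(1))
  qed simp
next
  case (Cons x u)
  obtain p e where x: "x = (p, e)" by (cases x)
  show ?case
  proof (cases v')
    case Nil
    then show ?thesis using nfw_head(2)[of I p e u] Cons.prems x by (metis cnt.simps(1))
  next
    case (Cons x' u')
    obtain p' e' where x': "x' = (p', e')" by (cases x')
    have A1: "nfw I ((p, e) # u)" and A2: "nfw I ((p', e') # u')" using Cons.prems x x' Cons by auto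
    have eq: "\<And>i. cnt ((p, e) # u) i = cnt ((p', e') # u') i" using Cons.prems(3) x x' Cons by simp
    have pp: "p = p'"
    proof (rule ccontr)
      assume "p \<noteq> p'"
      then consider "p < p'" | "p' < p" by fastforce
      then show False
      proof cases
        case 1 then show False using nfw_head[OF A1] nfw_head[OF A2] eq[of p'] by auto
      next
        case 2 then show False using nfw_head[OF A1] nfw_head[OF A2] eq[of p] by auto
      qed
    qed
    have ee: "e = e'" using nfw_head(3)[OF A1] nfw_head(3)[OF A2] eq[of p] pp by auto
    have "\<And>i. cnt u i = cnt u' i" using eq pp ee by simp
    moreover have "nfw I u" "nfw I u'" using A1 A2 by (auto simp: nfw_Cons)
    ultimately have "u = u'" using Cons.IH by blast
    then show ?thesis using pp ee x x' \<open>v' = x' # u'\<close> by simp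
  qed
qed

fun strip :: "('a, 'i) gletter list \<Rightarrow> ('i \<times> bool) list" where
  "strip [] = []"
| "strip (LA a # w) = strip w"
| "strip (LX p e # w) = (p, e) # strip w"

lemma strip_append: "strip (u @ v) = strip u @ strip v"
  by (induction u rule: strip.induct) auto

lemma strip_aword: "strip (aword A a) = []"
  by (simp add: aword_def)

lemma strip_LXp: "strip (map LXp v) = v"
  by (induction v) (auto simp: LXp_def)

lemma strip_word: "strip (word A v a) = rev v"
  by (simp add: word_def strip_append strip_aword strip_LXp)

context ext_data begin

lemma strip_lists: "u \<in> lists Y \<Longrightarrow> strip u \<in> lists (B_gens I)"
  by (induction u rule: strip.induct) (auto simp: G_gens_def B_gens_def)

lemma strip_PE: "PE u v \<Longrightarrow> PB I (strip u) (strip v)"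
proof (induction rule: pres_eq.induct)
  case (pe_refl w) then show ?case using strip_lists by (auto intro: pres_eq.pe_refl)
next
  case (pe_sym u v) then show ?case by (auto intro: pres_eq.pe_sym)
next
  case (pe_trans u v w) then show ?case by (auto intro: pres_eq.pe_trans)
next
  case (pe_rel l r w1 w2)
  have sl: "strip l \<in> lists (B_gens I)" "strip r \<in> lists (B_gens I)"
    "strip w1 \<in> lists (B_gens I)" "strip w2 \<in> lists (B_gens I)" using pe_rel strip_lists by auto
  have "PB I (strip l) (strip r)"
    using pe_rel(1) sl(1,2)
    unfolding G_rels_def
  proof (elim UnE CollectE exE conjE)
    fix a b assume "(l, r) = ([LA a, LA b], aword A (a \<otimes>\<^bsub>A\<^esub> b))"
    then show ?thesis by (auto simp: strip_aword intro: pres_eq.pe_refl)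
  next
    fix a p e assume "(l, r) = ([LA a, LX p e], LX p e # aword A (psi p e a))" "strip l \<in> lists (B_gens I)"
    then show ?thesis by (auto simp: strip_aword intro: pres_eq.pe_refl)
  next
    fix p q e d assume "(l, r) = ([LX p e, LX q d], [LX q d, LX p e] @ aword A (f p e q d))"
      "p \<in> I" "q \<in> I" "q < p" "strip l \<in> lists (B_gens I)" "strip r \<in> lists (B_gens I)"
    moreover have "([(p, e), (q, d)], [(q, d), (p, e)]) \<in> B_rels I" unfolding B_rels_def using calculation by blast
    ultimately show ?thesis by (auto simp: strip_append strip_aword intro: pres_eq_rel1)
  next
    fix q e assume "(l, r) = ([LX q e, LX q (\<not> e)], [])" "q \<in> I" "strip l \<in> lists (B_gens I)"
    moreover have "([(q, e), (q, \<not> e)], []) \<in> B_rels I" unfolding B_rels_def using calculation by blast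
    ultimately show ?thesis by (auto intro: pres_eq_rel1)
  qed
  then show ?case using pres_eq_cong[of "B_gens I" "B_rels I" "strip l" "strip r" "strip w1" "strip w2"] sl
    by (simp add: strip_append)
qed

end


context ext_data begin

abbreviation "cls \<equiv> pres_class Y S"
abbreviation "clsB \<equiv> pres_class (B_gens I) (B_rels I)"
abbreviation "PM \<equiv> pres_monoid Y S"
abbreviation "BM \<equiv> pres_monoid (B_gens I) (B_rels I)"

definition piP :: "('a, 'i) gletter list set \<Rightarrow> ('i \<times> bool) list set" where
  "piP C = clsB (strip (SOME w. w \<in> lists Y \<and> C = cls w))"

lemma piP_cls: assumes "w \<in> lists Y" shows "piP (cls w) = clsB (strip w)"
proof -
  define w' where "w' = (SOME w'. w' \<in> lists Y \<and> cls w = cls w')"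
  have "w' \<in> lists Y \<and> cls w = cls w'" unfolding w'_def by (rule someI[of _ w]) (use assms in simp)
  then have "PE w w'" using pres_class_eq_iff[OF assms, of S w'] by (simp only:)
  then have "PB I (strip w) (strip w')" by (rule strip_PE)
  then have "clsB (strip w) = clsB (strip w')" by (rule pres_class_eq_iff[OF strip_lists[OF assms], THEN iffD2])
  then show ?thesis unfolding piP_def w'_def by simp
qed

lemma cls_mult: "u \<in> lists Y \<Longrightarrow> v \<in> lists Y \<Longrightarrow> cls u \<otimes>\<^bsub>PM\<^esub> cls v = cls (u @ v)"
  by (rule pres_mult)

lemma cls_carrier: "u \<in> lists Y \<Longrightarrow> cls u \<in> carrier PM"
  by (simp add: pres_carrier)

lemma PM_carrierE: "C \<in> carrier PM \<Longrightarrow> (\<And>w. w \<in> lists Y \<Longrightarrow> C = cls w \<Longrightarrow> P) \<Longrightarrow> P"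
  by (auto simp: pres_carrier)

lemma piP_hom: "piP \<in> hom PM BM"
proof (rule homI)
  fix C assume "C \<in> carrier PM"
  then obtain w where w: "w \<in> lists Y" "C = cls w" by (rule PM_carrierE)
  then show "piP C \<in> carrier BM" using piP_cls strip_lists by (simp add: pres_carrier)
next
  fix C D assume "C \<in> carrier PM" "D \<in> carrier PM"
  then obtain u v where "u \<in> lists Y" "C = cls u" "v \<in> lists Y" "D = cls v"
    by (metis PM_carrierE)
  then show "piP (C \<otimes>\<^bsub>PM\<^esub> D) = piP C \<otimes>\<^bsub>BM\<^esub> piP D"
    using strip_lists by (simp add: cls_mult piP_cls pres_mult strip_append)
qed

end

context ext_cond begin
interpretation A: group A by (rule grp)

lemma backward:
  assumes G: "group G" and phi: "phi \<in> iso G PM"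
  shows "schreier_ext G A BM"
proof -
  interpret G: group G by (rule G)
  interpret B: group BM by (rule B_group)
  define phinv where "phinv = inv_into (carrier G) phi"
  have phinv: "phinv \<in> iso PM G" unfolding phinv_def by (rule G.iso_set_sym[OF phi])
  have phi_hom: "phi \<in> hom G PM" and phinv_hom: "phinv \<in> hom PM G"
    using phi phinv by (auto simp: iso_def)
  have phi_bij: "bij_betw phi (carrier G) (carrier PM)" using phi by (simp add: iso_def)
  have phi_inv: "\<And>C. C \<in> carrier PM \<Longrightarrow> phi (phinv C) = C"
    unfolding phinv_def using phi_bij by (meson bij_betw_inv_into_right)
  have inv_phi: "\<And>g. g \<in> carrier G \<Longrightarrow> phinv (phi g) = g"
    unfolding phinv_def using phi_bij by (meson bij_betw_inv_into_left)
  have phinv_car: "\<And>C. C \<in> carrier PM \<Longrightarrow> phinv C \<in> carrier G"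
    using phinv_hom by (simp add: hom_in_carrier)
  have phi_car: "\<And>g. g \<in> carrier G \<Longrightarrow> phi g \<in> carrier PM"
    using phi_hom by (simp add: hom_in_carrier)
  define h where "h = (\<lambda>g. piP (phi g))"
  have h_hom: "h \<in> hom G BM"
    unfolding h_def using hom_compose[OF phi_hom piP_hom] by (simp add: o_def)
  interpret gh: group_hom G BM h
    by (rule group_hom.intro[OF G B_group]) (simp add: group_hom_axioms_def h_hom)
  have h_surj: "h ` carrier G = carrier BM"
  proof
    show "h ` carrier G \<subseteq> carrier BM" using h_hom by (auto simp: hom_def)
  next
    show "carrier BM \<subseteq> h ` carrier G"
    proof
      fix Xb assume "Xb \<in> carrier BM"
      then obtain x where x: "x \<in> lists (B_gens I)" "Xb = clsB x" by (auto simp: pres_carrier)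
      have lx: "map LXp x \<in> lists Y" using x by (intro LXp_lists) (auto simp: B_gens_def in_lists_conv_set)
      have "h (phinv (cls (map LXp x))) = Xb"
        unfolding h_def using phi_inv[OF cls_carrier[OF lx]] piP_cls[OF lx] x by (simp add: strip_LXp)
      then show "Xb \<in> h ` carrier G" using phinv_car[OF cls_carrier[OF lx]] by blast
    qed
  qed
  define N where "N = kernel G BM h"
  have Nn: "N \<lhd> G" unfolding N_def by (rule gh.normal_kernel)
  have quot: "G Mod N \<cong> BM" unfolding N_def by (rule gh.FactGroup_iso[OF h_surj])
  define kap where "kap = (\<lambda>a. phinv (cls (aword A a)))"
  have kap_car: "\<And>a. a \<in> carrier A \<Longrightarrow> kap a \<in> carrier G"
    unfolding kap_def by (intro phinv_car cls_carrier aword_lists)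
  have kap_N: "\<And>a. a \<in> carrier A \<Longrightarrow> kap a \<in> N"
  proof -
    fix a assume a: "a \<in> carrier A"
    have "h (kap a) = clsB []" unfolding h_def kap_def
      using phi_inv[OF cls_carrier[OF aword_lists[OF a]]] piP_cls[OF aword_lists[OF a]]
      by (simp add: strip_aword)
    then show "kap a \<in> N" unfolding N_def kernel_def using kap_car[OF a] by (simp add: pres_one)
  qed
  have kap_hom: "kap \<in> hom A (G\<lparr>carrier := N\<rparr>)"
  proof (rule homI)
    fix a assume "a \<in> carrier A" then show "kap a \<in> carrier (G\<lparr>carrier := N\<rparr>)" using kap_N by simp
  next
    fix a b assume a: "a \<in> carrier A" and b: "b \<in> carrier A"
    have "cls (aword A a @ aword A b) = cls (aword A (a \<otimes>\<^bsub>A\<^esub> b))"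
      using aword_mult[OF a b] aword_lists[OF a] aword_lists[OF b]
      by (intro pres_class_eq_iff[THEN iffD2]) simp_all
    then have "cls (aword A (a \<otimes>\<^bsub>A\<^esub> b)) = cls (aword A a) \<otimes>\<^bsub>PM\<^esub> cls (aword A b)"
      using cls_mult[OF aword_lists[OF a] aword_lists[OF b]] by simp
    then show "kap (a \<otimes>\<^bsub>A\<^esub> b) = kap a \<otimes>\<^bsub>G\<lparr>carrier := N\<rparr>\<^esub> kap b"
      unfolding kap_def using hom_mult[OF phinv_hom] cls_carrier aword_lists a b by simp
  qed
  have kap_inj: "inj_on kap (carrier A)"
  proof (rule inj_onI)
    fix a b assume a: "a \<in> carrier A" and b: "b \<in> carrier A" and e: "kap a = kap b"
    have "cls (aword A a) = cls (aword A b)"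
      using arg_cong[OF e, of phi] phi_inv cls_carrier aword_lists a b unfolding kap_def by simp
    then have "PE (aword A a) (aword A b)" by (rule pres_class_eq_iff[OF aword_lists[OF a], THEN iffD1])
    then show "a = b" using aword_inj a b by blast
  qed
  have kap_surj: "N \<subseteq> kap ` carrier A"
  proof
    fix g assume gN: "g \<in> N"
    then have g: "g \<in> carrier G" and hg: "h g = clsB []" unfolding N_def kernel_def by (auto simp: pres_one)
    obtain w where w: "w \<in> lists Y" "phi g = cls w" using phi_car[OF g] by (rule PM_carrierE)
    define s where "s = act A f psi w ([], \<one>\<^bsub>A\<^esub>)"
    have nf: "PE w (word A (fst s) (snd s))" "nfs s" using normal_form[OF w(1)] unfolding s_def by auto
    have sv: "nfw I (fst s)" "snd s \<in> carrier A" using nf(2) by (auto simp: nfs_def)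
    have "clsB (strip w) = clsB []" using hg w unfolding h_def by (simp add: piP_cls)
    then have "PB I (strip w) []" by (rule pres_class_eq_iff[OF strip_lists[OF w(1)], THEN iffD1])
    moreover have "PB I (strip w) (rev (fst s))" using strip_PE[OF nf(1)] by (simp add: strip_word)
    ultimately have "PB I (rev (fst s)) []" by (meson pres_eq.pe_sym pres_eq.pe_trans)
    then have "\<And>i. cnt (rev (fst s)) i = 0" using cnt_PB by (metis cnt.simps(1))
    then have "fst s = []" using nfw_cnt_unique[OF sv(1) nfw_Nil] by (simp add: cnt_rev)
    then have "PE w (aword A (snd s))" using nf(1) by (simp add: word_def)
    then have "cls w = cls (aword A (snd s))" by (rule pres_class_eq_iff[OF w(1), THEN iffD2])
    then have "g = kap (snd s)" unfolding kap_def using inv_phi[OF g] w by simp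
    then show "g \<in> kap ` carrier A" using sv by blast
  qed
  have "kap \<in> iso A (G\<lparr>carrier := N\<rparr>)"
    using kap_hom kap_inj kap_surj kap_N unfolding iso_def bij_betw_def by auto
  then have "A \<cong> G\<lparr>carrier := N\<rparr>" by (rule is_isoI)
  then have "G\<lparr>carrier := N\<rparr> \<cong> A" by (rule A.iso_sym)
  then show ?thesis unfolding schreier_ext_def using G Nn quot by blast
qed

end


lemma (in group) rcancel: "x \<in> carrier G \<Longrightarrow> y \<in> carrier G \<Longrightarrow> c \<in> carrier G \<Longrightarrow> x \<otimes> c = y \<otimes> c \<Longrightarrow> x = y"
  by (metis inv_solve_right' m_closed)

lemma (in group) gc1: "x \<in> carrier G \<Longrightarrow> y \<in> carrier G \<Longrightarrow> x \<otimes> (inv x \<otimes> y) = y"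
  by (simp add: m_assoc[symmetric])

lemma (in group) gc2: "x \<in> carrier G \<Longrightarrow> y \<in> carrier G \<Longrightarrow> inv x \<otimes> (x \<otimes> y) = y"
  by (simp add: m_assoc[symmetric])

locale fwd =
  fixes G :: "('g, 'n) monoid_scheme" and A :: "('a, 'm) monoid_scheme" and I :: "'i::linorder set"
    and N :: "'g set" and h :: "'g \<Rightarrow> 'a" and th :: "'g set \<Rightarrow> ('i \<times> bool) list set"
  assumes grpG: "group G" and grpA: "group A" and nrm: "N \<lhd> G"
    and h_iso: "h \<in> iso (G\<lparr>carrier := N\<rparr>) A"
    and th_iso: "th \<in> iso (G Mod N) (pres_monoid (B_gens I) (B_rels I))"
begin

interpretation G: group G by (rule grpG)
interpretation A: group A by (rule grpA)
interpretation B: group "pres_monoid (B_gens I) (B_rels I)" by (rule B_group)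
interpretation Nn: normal N G by (rule nrm)

abbreviation "cB \<equiv> pres_class (B_gens I) (B_rels I)"
abbreviation "BB \<equiv> pres_monoid (B_gens I) (B_rels I)"

lemmas gs = G.m_assoc G.inv_mult_group G.gc1 G.gc2 G.r_inv G.l_inv G.r_one G.l_one G.inv_closed G.m_closed

lemma N_sub: "subgroup N G" by (rule normal_imp_subgroup[OF nrm])

lemma N_car: "n \<in> N \<Longrightarrow> n \<in> carrier G" using N_sub by (meson subgroup.mem_carrier)

lemma N_mult: "x \<in> N \<Longrightarrow> y \<in> N \<Longrightarrow> x \<otimes>\<^bsub>G\<^esub> y \<in> N" using N_sub by (meson subgroup.m_closed)

lemma N_one: "\<one>\<^bsub>G\<^esub> \<in> N" using N_sub by (meson subgroup.one_closed)

lemma N_inv: "x \<in> N \<Longrightarrow> inv\<^bsub>G\<^esub> x \<in> N" using N_sub by (meson subgroup.m_inv_closed)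

lemma N_conj: "x \<in> carrier G \<Longrightarrow> n \<in> N \<Longrightarrow> inv\<^bsub>G\<^esub> x \<otimes>\<^bsub>G\<^esub> n \<otimes>\<^bsub>G\<^esub> x \<in> N"
  by (rule Nn.inv_op_closed1)

lemma h_bij: "bij_betw h N (carrier A)" using h_iso by (simp add: iso_def)

lemma h_mult: "x \<in> N \<Longrightarrow> y \<in> N \<Longrightarrow> h (x \<otimes>\<^bsub>G\<^esub> y) = h x \<otimes>\<^bsub>A\<^esub> h y"
  using h_iso by (auto simp: iso_def hom_def)

lemma h_car: "x \<in> N \<Longrightarrow> h x \<in> carrier A" using h_bij by (meson bij_betwE)

definition "hinv = inv_into N h"

lemma hinv_N: "a \<in> carrier A \<Longrightarrow> hinv a \<in> N"
  unfolding hinv_def using h_bij by (meson bij_betwE bij_betw_inv_into)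

lemma h_hinv: "a \<in> carrier A \<Longrightarrow> h (hinv a) = a"
  unfolding hinv_def using h_bij by (meson bij_betw_inv_into_right)

lemma hinv_h: "n \<in> N \<Longrightarrow> hinv (h n) = n"
  unfolding hinv_def using h_bij by (meson bij_betw_inv_into_left)

lemma hinv_car: "a \<in> carrier A \<Longrightarrow> hinv a \<in> carrier G" using hinv_N N_car by blast

lemma h_one: "h \<one>\<^bsub>G\<^esub> = \<one>\<^bsub>A\<^esub>"
proof -
  have "h \<one>\<^bsub>G\<^esub> \<otimes>\<^bsub>A\<^esub> h \<one>\<^bsub>G\<^esub> = h \<one>\<^bsub>G\<^esub> \<otimes>\<^bsub>A\<^esub> \<one>\<^bsub>A\<^esub>"
    using h_mult[OF N_one N_one] h_car[OF N_one] by simp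
  then show ?thesis using h_car[OF N_one] by simp
qed

lemma hinv_one: "hinv \<one>\<^bsub>A\<^esub> = \<one>\<^bsub>G\<^esub>" using hinv_h[OF N_one] h_one by simp

lemma hinv_mult: "a \<in> carrier A \<Longrightarrow> b \<in> carrier A \<Longrightarrow> hinv (a \<otimes>\<^bsub>A\<^esub> b) = hinv a \<otimes>\<^bsub>G\<^esub> hinv b"
  using h_mult[OF hinv_N hinv_N, of a b] h_hinv hinv_h[OF N_mult[OF hinv_N hinv_N, of a b]] by simp

lemma hinv_inj: "a \<in> carrier A \<Longrightarrow> b \<in> carrier A \<Longrightarrow> hinv a = hinv b \<Longrightarrow> a = b"
  using h_hinv by metis

lemma th_hom: "Q1 \<in> carrier (G Mod N) \<Longrightarrow> Q2 \<in> carrier (G Mod N) \<Longrightarrow> th (Q1 <#>\<^bsub>G\<^esub> Q2) = th Q1 \<otimes>\<^bsub>BB\<^esub> th Q2"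
  using th_iso by (auto simp: iso_def hom_def FactGroup_def)

lemma th_car: "Q1 \<in> carrier (G Mod N) \<Longrightarrow> th Q1 \<in> carrier BB"
  using th_iso by (auto simp: iso_def hom_def)

lemma th_bij: "bij_betw th (carrier (G Mod N)) (carrier BB)" using th_iso by (simp add: iso_def)

lemma coset_car: "g \<in> carrier G \<Longrightarrow> N #>\<^bsub>G\<^esub> g \<in> carrier (G Mod N)"
  by (simp add: carrier_FactGroup)

lemma coset_mult: "a \<in> carrier G \<Longrightarrow> b \<in> carrier G \<Longrightarrow> th (N #>\<^bsub>G\<^esub> (a \<otimes>\<^bsub>G\<^esub> b)) = th (N #>\<^bsub>G\<^esub> a) \<otimes>\<^bsub>BB\<^esub> th (N #>\<^bsub>G\<^esub> b)"
  using th_hom[OF coset_car coset_car, of a b] Nn.rcos_sum by simp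

lemma th_one: "th N = \<one>\<^bsub>BB\<^esub>"
proof -
  interpret Q: group "G Mod N" by (rule Nn.factorgroup_is_group)
  have "th \<in> hom (G Mod N) BB" using th_iso by (simp add: iso_def)
  then have "th \<one>\<^bsub>G Mod N\<^esub> = \<one>\<^bsub>BB\<^esub>" using hom_one Q.group_axioms B_group by blast
  then show ?thesis by simp
qed

lemma th_coset_one: "th (N #>\<^bsub>G\<^esub> \<one>\<^bsub>G\<^esub>) = cB []"
  using th_one N_sub by (simp add: pres_one subgroup.subset)

lemma coset_eq: "a \<in> carrier G \<Longrightarrow> b \<in> carrier G \<Longrightarrow> th (N #>\<^bsub>G\<^esub> a) = th (N #>\<^bsub>G\<^esub> b) \<Longrightarrow> a \<otimes>\<^bsub>G\<^esub> inv\<^bsub>G\<^esub> b \<in> N"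
proof -
  assume a: "a \<in> carrier G" and b: "b \<in> carrier G" and e: "th (N #>\<^bsub>G\<^esub> a) = th (N #>\<^bsub>G\<^esub> b)"
  have "N #>\<^bsub>G\<^esub> a = N #>\<^bsub>G\<^esub> b" using e th_bij coset_car[OF a] coset_car[OF b]
    by (meson bij_betw_def inj_onD)
  then have "a \<in> N #>\<^bsub>G\<^esub> b" using G.rcos_self[OF a N_sub] by simp
  then show ?thesis using subgroup.rcos_module_imp[OF N_sub grpG b] by simp
qed

lemma cB_mult: "x \<in> lists (B_gens I) \<Longrightarrow> y \<in> lists (B_gens I) \<Longrightarrow> cB x \<otimes>\<^bsub>BB\<^esub> cB y = cB (x @ y)"
  by (rule pres_mult)

definition "tt p = (SOME g. g \<in> carrier G \<and> th (N #>\<^bsub>G\<^esub> g) = cB [(p, True)])"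

lemma tt: "p \<in> I \<Longrightarrow> tt p \<in> carrier G \<and> th (N #>\<^bsub>G\<^esub> tt p) = cB [(p, True)]"
proof -
  assume p: "p \<in> I"
  have "cB [(p, True)] \<in> carrier BB" using p by (simp add: pres_carrier B_gens_def)
  then obtain Q1 where Q1: "Q1 \<in> carrier (G Mod N)" "th Q1 = cB [(p, True)]"
    using th_bij by (metis bij_betw_def imageE)
  then obtain g where "g \<in> carrier G" "Q1 = N #>\<^bsub>G\<^esub> g" by (auto simp: carrier_FactGroup)
  then have "\<exists>g. g \<in> carrier G \<and> th (N #>\<^bsub>G\<^esub> g) = cB [(p, True)]" using Q1 by blast
  then show ?thesis unfolding tt_def by (rule someI_ex)
qed

definition "lift p e = (if e then tt p else inv\<^bsub>G\<^esub> (tt p))"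

lemma lift_car: "p \<in> I \<Longrightarrow> lift p e \<in> carrier G"
  using tt by (simp add: lift_def)

lemma lift_not: "p \<in> I \<Longrightarrow> lift p (\<not> e) = inv\<^bsub>G\<^esub> (lift p e)"
  using tt by (simp add: lift_def)

lemma th_lift: "p \<in> I \<Longrightarrow> th (N #>\<^bsub>G\<^esub> lift p e) = cB [(p, e)]"
proof (cases e)
  case True
  assume p: "p \<in> I" then show ?thesis using True tt by (simp add: lift_def)
next
  case False
  assume p: "p \<in> I"
  have t: "tt p \<in> carrier G" "th (N #>\<^bsub>G\<^esub> tt p) = cB [(p, True)]" using tt[OF p] by auto
  have c1: "th (N #>\<^bsub>G\<^esub> inv\<^bsub>G\<^esub> tt p) \<otimes>\<^bsub>BB\<^esub> cB [(p, True)] = \<one>\<^bsub>BB\<^esub>"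
    using coset_mult[of "inv\<^bsub>G\<^esub> tt p" "tt p"] t th_coset_one by (simp add: pres_one)
  have r: "([(p, False), (p, \<not> False)], []) \<in> B_rels I" unfolding B_rels_def using p by blast
  have "PB I [(p, False), (p, True)] []" using pres_eq_rel1[OF r] p by (simp add: B_gens_def)
  then have c2: "cB [(p, False)] \<otimes>\<^bsub>BB\<^esub> cB [(p, True)] = \<one>\<^bsub>BB\<^esub>"
    using p cB_mult[of "[(p, False)]" "[(p, True)]"] pres_class_eq_iff[of "[(p, False), (p, True)]" "B_gens I" "B_rels I" "[]"]
    by (simp add: pres_one B_gens_def)
  have "th (N #>\<^bsub>G\<^esub> inv\<^bsub>G\<^esub> tt p) = cB [(p, False)]"
    apply (rule B.rcancel[of _ _ "cB [(p, True)]"])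
    using th_car coset_car t p c1 c2 by (auto simp: pres_carrier B_gens_def)
  then show ?thesis using False by (simp add: lift_def)
qed

definition "psiF p e a = h (inv\<^bsub>G\<^esub> (lift p e) \<otimes>\<^bsub>G\<^esub> hinv a \<otimes>\<^bsub>G\<^esub> lift p e)"
definition "fN p e q d = inv\<^bsub>G\<^esub> (lift q d \<otimes>\<^bsub>G\<^esub> lift p e) \<otimes>\<^bsub>G\<^esub> (lift p e \<otimes>\<^bsub>G\<^esub> lift q d)"
definition "fF p e q d = h (fN p e q d)"

lemma fN_N:
  assumes p: "p \<in> I" and q: "q \<in> I" and pq: "q < p"
  shows "fN p e q d \<in> N"
proof -
  have l: "lift p e \<in> carrier G" "lift q d \<in> carrier G" using lift_car p q by auto
  have r: "([(p, e), (q, d)], [(q, d), (p, e)]) \<in> B_rels I" unfolding B_rels_def using p q pq by blast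
  have "PB I [(p, e), (q, d)] [(q, d), (p, e)]" using pres_eq_rel1[OF r] p q by (simp add: B_gens_def)
  then have ceq: "cB [(p, e), (q, d)] = cB [(q, d), (p, e)]"
    using pres_class_eq_iff[of "[(p, e), (q, d)]" "B_gens I" "B_rels I"] p q by (simp add: B_gens_def)
  have "th (N #>\<^bsub>G\<^esub> (lift p e \<otimes>\<^bsub>G\<^esub> lift q d)) = th (N #>\<^bsub>G\<^esub> (lift q d \<otimes>\<^bsub>G\<^esub> lift p e))"
    using coset_mult l th_lift p q cB_mult[of "[(p, e)]" "[(q, d)]"] cB_mult[of "[(q, d)]" "[(p, e)]"] ceq
    by (simp add: B_gens_def)
  then have m: "(lift p e \<otimes>\<^bsub>G\<^esub> lift q d) \<otimes>\<^bsub>G\<^esub> inv\<^bsub>G\<^esub> (lift q d \<otimes>\<^bsub>G\<^esub> lift p e) \<in> N"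
    using coset_eq l by simp
  have "inv\<^bsub>G\<^esub> (lift q d \<otimes>\<^bsub>G\<^esub> lift p e) \<otimes>\<^bsub>G\<^esub> ((lift p e \<otimes>\<^bsub>G\<^esub> lift q d) \<otimes>\<^bsub>G\<^esub> inv\<^bsub>G\<^esub> (lift q d \<otimes>\<^bsub>G\<^esub> lift p e))
         \<otimes>\<^bsub>G\<^esub> (lift q d \<otimes>\<^bsub>G\<^esub> lift p e) \<in> N"
    using N_conj[OF _ m] l by simp
  moreover have "inv\<^bsub>G\<^esub> (lift q d \<otimes>\<^bsub>G\<^esub> lift p e) \<otimes>\<^bsub>G\<^esub> ((lift p e \<otimes>\<^bsub>G\<^esub> lift q d) \<otimes>\<^bsub>G\<^esub> inv\<^bsub>G\<^esub> (lift q d \<otimes>\<^bsub>G\<^esub> lift p e))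
         \<otimes>\<^bsub>G\<^esub> (lift q d \<otimes>\<^bsub>G\<^esub> lift p e) = fN p e q d"
    unfolding fN_def using l by (simp add: gs)
  ultimately show ?thesis by simp
qed

end


context fwd begin

interpretation G: group G by (rule grpG)
interpretation A: group A by (rule grpA)

lemma psiF_N: "p \<in> I \<Longrightarrow> a \<in> carrier A \<Longrightarrow> inv\<^bsub>G\<^esub> (lift p e) \<otimes>\<^bsub>G\<^esub> hinv a \<otimes>\<^bsub>G\<^esub> lift p e \<in> N"
  using N_conj lift_car hinv_N by blast

lemma psiF_car [simp]: "p \<in> I \<Longrightarrow> a \<in> carrier A \<Longrightarrow> psiF p e a \<in> carrier A"
  unfolding psiF_def using psiF_N h_car by blast

lemma hinv_psiF [simp]: "p \<in> I \<Longrightarrow> a \<in> carrier A \<Longrightarrow> hinv (psiF p e a) = inv\<^bsub>G\<^esub> (lift p e) \<otimes>\<^bsub>G\<^esub> hinv a \<otimes>\<^bsub>G\<^esub> lift p e"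
  unfolding psiF_def using psiF_N hinv_h by blast

lemma fF_car [simp]: "p \<in> I \<Longrightarrow> q \<in> I \<Longrightarrow> q < p \<Longrightarrow> fF p e q d \<in> carrier A"
  unfolding fF_def using fN_N h_car by blast

lemma hinv_fF [simp]: "p \<in> I \<Longrightarrow> q \<in> I \<Longrightarrow> q < p \<Longrightarrow> hinv (fF p e q d) = fN p e q d"
  unfolding fF_def using fN_N hinv_h by blast

lemma eq_by_hinv: "a \<in> carrier A \<Longrightarrow> b \<in> carrier A \<Longrightarrow> hinv a = hinv b \<Longrightarrow> a = b"
  by (rule hinv_inj)

lemmas hs = hinv_mult hinv_car lift_car lift_not hinv_one

lemma cond1:
  assumes "p \<in> I" "q \<in> I" "r \<in> I" "q < p" "r < q"
  shows "fF p e q d \<otimes>\<^bsub>A\<^esub> psiF q d (fF p e r g) \<otimes>\<^bsub>A\<^esub> fF q d r g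
          = psiF p e (fF q d r g) \<otimes>\<^bsub>A\<^esub> fF p e r g \<otimes>\<^bsub>A\<^esub> psiF r g (fF p e q d)"
  apply (rule eq_by_hinv)
  using assms apply simp
  using assms apply simp
  using assms less_trans[OF assms(5) assms(4)] by (simp add: hs fN_def gs)

lemma cond2:
  assumes "p \<in> I" "q \<in> I" "q < p"
  shows "fF p e q (\<not> d) \<otimes>\<^bsub>A\<^esub> psiF q (\<not> d) (fF p e q d) = \<one>\<^bsub>A\<^esub>"
  apply (rule eq_by_hinv)
  using assms apply simp
  using assms apply simp
  using assms by (simp add: hs fN_def gs)

lemma cond3:
  assumes "p \<in> I" "q \<in> I" "q < p"
  shows "psiF p (\<not> e) (fF p e q d) \<otimes>\<^bsub>A\<^esub> fF p (\<not> e) q d = \<one>\<^bsub>A\<^esub>"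
  apply (rule eq_by_hinv)
  using assms apply simp
  using assms apply simp
  using assms by (simp add: hs fN_def gs)

lemma cond4:
  assumes "p \<in> I" "q \<in> I" "q < p" "a \<in> carrier A"
  shows "psiF p e (psiF q d a) \<otimes>\<^bsub>A\<^esub> fF p e q d = fF p e q d \<otimes>\<^bsub>A\<^esub> psiF q d (psiF p e a)"
  apply (rule eq_by_hinv)
  using assms apply simp
  using assms apply simp
  using assms by (simp add: hs fN_def gs)

lemma cond5:
  assumes "r \<in> I" "a \<in> carrier A"
  shows "psiF r (\<not> e) (psiF r e a) = a"
  apply (rule eq_by_hinv)
  using assms apply simp
  using assms apply simp
  using assms by (simp add: hs gs)

lemma psiF_iso: "p \<in> I \<Longrightarrow> psiF p e \<in> iso A A"
proof -
  assume p: "p \<in> I"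
  have hom: "psiF p e \<in> hom A A"
  proof (rule homI)
    fix a b assume a: "a \<in> carrier A" and b: "b \<in> carrier A"
    show "psiF p e (a \<otimes>\<^bsub>A\<^esub> b) = psiF p e a \<otimes>\<^bsub>A\<^esub> psiF p e b"
      apply (rule eq_by_hinv)
      using a b p apply simp
      using a b p apply simp
      using a b p by (simp add: hs gs)
  qed (use p in simp)
  have inj: "inj_on (psiF p e) (carrier A)"
    by (rule inj_onI) (metis cond5[OF p])
  have "carrier A \<subseteq> psiF p e ` carrier A"
  proof
    fix a assume a: "a \<in> carrier A"
    have "psiF p e (psiF p (\<not> e) a) = a" using cond5[OF p a, of "\<not> e"] by simp
    then show "a \<in> psiF p e ` carrier A" using a p by (metis psiF_car imageI)
  qed
  then have "psiF p e ` carrier A = carrier A" using p by auto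
  then show ?thesis using hom inj by (simp add: iso_iff)
qed

lemma ext_data: "ext_data A I fF psiF"
  by (unfold_locales) (auto intro: grpA psiF_iso)

end


context fwd begin

interpretation G: group G by (rule grpG)
interpretation A: group A by (rule grpA)
interpretation E: ext_data A I fF psiF by (rule ext_data)
interpretation B: group BB by (rule B_group)

definition "evl l = (case l of LA a \<Rightarrow> hinv a | LX p e \<Rightarrow> lift p e)"
definition "ev w = foldr (\<lambda>l acc. evl l \<otimes>\<^bsub>G\<^esub> acc) w \<one>\<^bsub>G\<^esub>"

lemma ev_Nil [simp]: "ev [] = \<one>\<^bsub>G\<^esub>" by (simp add: ev_def)
lemma ev_Cons [simp]: "ev (l # w) = evl l \<otimes>\<^bsub>G\<^esub> ev w" by (simp add: ev_def)

lemma evl_car: "l \<in> E.Y \<Longrightarrow> evl l \<in> carrier G"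
  by (auto simp: G_gens_def evl_def hinv_car lift_car)

lemma ev_car: "w \<in> lists E.Y \<Longrightarrow> ev w \<in> carrier G"
  by (induction w) (auto simp: evl_car)

lemma ev_append: "u \<in> lists E.Y \<Longrightarrow> v \<in> lists E.Y \<Longrightarrow> ev (u @ v) = ev u \<otimes>\<^bsub>G\<^esub> ev v"
  by (induction u) (auto simp: evl_car ev_car G.m_assoc)

lemma ev_aword: "a \<in> carrier A \<Longrightarrow> ev (aword A a) = hinv a"
  by (auto simp: aword_def evl_def hinv_one hinv_car)

lemma ev_rel: "(l, r) \<in> E.S \<Longrightarrow> ev l = ev r"
  unfolding G_rels_def
proof (elim UnE CollectE exE conjE)
  fix a b assume e: "(l, r) = ([LA a, LA b], aword A (a \<otimes>\<^bsub>A\<^esub> b))" and ab: "a \<in> carrier A - {\<one>\<^bsub>A\<^esub>}" "b \<in> carrier A - {\<one>\<^bsub>A\<^esub>}"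
  then show ?thesis by (simp add: ev_aword evl_def hinv_mult hinv_car)
next
  fix a p e assume eq: "(l, r) = ([LA a, LX p e], LX p e # aword A (psiF p e a))" and a: "a \<in> carrier A - {\<one>\<^bsub>A\<^esub>}" and p: "p \<in> I"
  then show ?thesis by (simp add: ev_aword evl_def hinv_car lift_car gs)
next
  fix p q e d assume eq: "(l, r) = ([LX p e, LX q d], [LX q d, LX p e] @ aword A (fF p e q d))" and pq: "p \<in> I" "q \<in> I" "q < p"
  then show ?thesis by (simp add: ev_aword evl_def hinv_car lift_car gs fN_def)
next
  fix q e assume eq: "(l, r) = ([LX q e, LX q (\<not> e)], [])" and q: "q \<in> I"
  then show ?thesis by (simp add: evl_def lift_car lift_not gs)
qed

lemma ev_PE: "E.PE u v \<Longrightarrow> ev u = ev v"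
proof (induction rule: pres_eq.induct)
  case (pe_rel l r w1 w2)
  then show ?case using ev_rel[OF pe_rel(1)] by (simp add: ev_append)
qed auto

lemma ev_LXp: "x \<in> lists (B_gens I) \<Longrightarrow> th (N #>\<^bsub>G\<^esub> ev (map LXp x)) = cB x"
proof (induction x)
  case Nil then show ?case using th_coset_one by simp
next
  case (Cons y x)
  obtain p e where y: "y = (p, e)" by (cases y)
  have p: "p \<in> I" and x: "x \<in> lists (B_gens I)" using Cons.prems y by (auto simp: B_gens_def)
  have "map LXp x \<in> lists E.Y" using E.LXp_lists x by (auto simp: B_gens_def in_lists_conv_set)
  then have "th (N #>\<^bsub>G\<^esub> ev (map LXp (y # x))) = th (N #>\<^bsub>G\<^esub> lift p e) \<otimes>\<^bsub>BB\<^esub> th (N #>\<^bsub>G\<^esub> ev (map LXp x))"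
    using coset_mult lift_car[OF p] ev_car y by (simp add: LXp_def evl_def)
  also have "\<dots> = cB [(p, e)] \<otimes>\<^bsub>BB\<^esub> cB x" using th_lift[OF p] Cons.IH[OF x] by simp
  also have "\<dots> = cB (y # x)" using cB_mult[of "[(p, e)]" x] p x y by (simp add: B_gens_def)
  finally show ?case .
qed

lemma coset_absorb: "g \<in> carrier G \<Longrightarrow> n \<in> N \<Longrightarrow> th (N #>\<^bsub>G\<^esub> (g \<otimes>\<^bsub>G\<^esub> n)) = th (N #>\<^bsub>G\<^esub> g)"
proof -
  assume g: "g \<in> carrier G" and n: "n \<in> N"
  have "N #>\<^bsub>G\<^esub> n = N" using subgroup.rcos_const[OF N_sub grpG n] .
  then have "th (N #>\<^bsub>G\<^esub> n) = \<one>\<^bsub>BB\<^esub>" using th_one by simp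
  then show ?thesis using coset_mult[OF g N_car[OF n]] th_car[OF coset_car[OF g]] B.r_one by simp
qed

lemma ev_inj:
  assumes u: "u \<in> lists E.Y" and v: "v \<in> lists E.Y" and e: "ev u = ev v"
  shows "E.PE u v"
proof -
  define su where "su = act A fF psiF u ([], \<one>\<^bsub>A\<^esub>)"
  define sv where "sv = act A fF psiF v ([], \<one>\<^bsub>A\<^esub>)"
  have nu: "E.PE u (word A (fst su) (snd su))" "E.nfs su" using E.normal_form[OF u] unfolding su_def by auto
  have nv: "E.PE v (word A (fst sv) (snd sv))" "E.nfs sv" using E.normal_form[OF v] unfolding sv_def by auto
  have su: "nfw I (fst su)" "snd su \<in> carrier A" and sv: "nfw I (fst sv)" "snd sv \<in> carrier A"
    using nu(2) nv(2) by (auto simp: E.nfs_def)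
  have lu: "map LXp (rev (fst su)) \<in> lists E.Y" using su E.LXp_lists[of "rev (fst su)"] by (simp add: nfw_def)
  have lv: "map LXp (rev (fst sv)) \<in> lists E.Y" using sv E.LXp_lists[of "rev (fst sv)"] by (simp add: nfw_def)
  have eu: "ev u = ev (map LXp (rev (fst su))) \<otimes>\<^bsub>G\<^esub> hinv (snd su)"
    using ev_PE[OF nu(1)] ev_append[OF lu E.aword_lists[OF su(2)]] ev_aword[OF su(2)] by (simp add: word_def)
  have ev': "ev v = ev (map LXp (rev (fst sv))) \<otimes>\<^bsub>G\<^esub> hinv (snd sv)"
    using ev_PE[OF nv(1)] ev_append[OF lv E.aword_lists[OF sv(2)]] ev_aword[OF sv(2)] by (simp add: word_def)
  have bu: "rev (fst su) \<in> lists (B_gens I)" and bv: "rev (fst sv) \<in> lists (B_gens I)"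
    using su sv by (auto simp: nfw_def B_gens_def in_lists_conv_set)
  have "th (N #>\<^bsub>G\<^esub> ev u) = cB (rev (fst su))"
    using eu coset_absorb[OF ev_car[OF lu] hinv_N[OF su(2)]] ev_LXp[OF bu] by simp
  moreover have "th (N #>\<^bsub>G\<^esub> ev v) = cB (rev (fst sv))"
    using ev' coset_absorb[OF ev_car[OF lv] hinv_N[OF sv(2)]] ev_LXp[OF bv] by simp
  ultimately have "cB (rev (fst su)) = cB (rev (fst sv))" using e by simp
  then have "PB I (rev (fst su)) (rev (fst sv))" by (rule pres_class_eq_iff[OF bu, THEN iffD1])
  then have "cnt (rev (fst su)) = cnt (rev (fst sv))" by (rule cnt_PB)
  then have "\<And>i. cnt (rev (fst su)) i = cnt (rev (fst sv)) i" by simp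
  then have vv: "fst su = fst sv" using nfw_cnt_unique[OF su(1) sv(1)] by (simp add: cnt_rev)
  then have "ev (map LXp (rev (fst su))) \<otimes>\<^bsub>G\<^esub> hinv (snd su) = ev (map LXp (rev (fst su))) \<otimes>\<^bsub>G\<^esub> hinv (snd sv)"
    using eu ev' e by simp
  then have "inv\<^bsub>G\<^esub> ev (map LXp (rev (fst su))) \<otimes>\<^bsub>G\<^esub> (ev (map LXp (rev (fst su))) \<otimes>\<^bsub>G\<^esub> hinv (snd su))
     = inv\<^bsub>G\<^esub> ev (map LXp (rev (fst su))) \<otimes>\<^bsub>G\<^esub> (ev (map LXp (rev (fst su))) \<otimes>\<^bsub>G\<^esub> hinv (snd sv))"
    by simp
  then have "hinv (snd su) = hinv (snd sv)"
    using G.gc2[OF ev_car[OF lu] hinv_car[OF su(2)]] G.gc2[OF ev_car[OF lu] hinv_car[OF sv(2)]] by simp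
  then have "snd su = snd sv" using hinv_inj su sv by blast
  then have "word A (fst su) (snd su) = word A (fst sv) (snd sv)" using vv by simp
  then have "E.PE (word A (fst su) (snd su)) v" using pres_eq.pe_sym[OF nv(1)] by simp
  then show ?thesis by (rule pres_eq.pe_trans[OF nu(1)])
qed

lemma ev_surj:
  assumes g: "g \<in> carrier G"
  shows "\<exists>w\<in>lists E.Y. ev w = g"
proof -
  have "th (N #>\<^bsub>G\<^esub> g) \<in> carrier BB" using th_car coset_car g by blast
  then obtain x where x: "x \<in> lists (B_gens I)" "th (N #>\<^bsub>G\<^esub> g) = cB x" by (auto simp: pres_carrier)
  have lx: "map LXp x \<in> lists E.Y" using x E.LXp_lists by (auto simp: B_gens_def in_lists_conv_set)
  have "th (N #>\<^bsub>G\<^esub> g) = th (N #>\<^bsub>G\<^esub> ev (map LXp x))" using x ev_LXp by simp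
  then have n: "g \<otimes>\<^bsub>G\<^esub> inv\<^bsub>G\<^esub> ev (map LXp x) \<in> N" using coset_eq g ev_car[OF lx] by blast
  define n where "n = g \<otimes>\<^bsub>G\<^esub> inv\<^bsub>G\<^esub> ev (map LXp x)"
  have hn: "h n \<in> carrier A" using h_car n unfolding n_def by blast
  have w: "aword A (h n) @ map LXp x \<in> lists E.Y" using E.aword_lists[OF hn] lx by simp
  have "ev (aword A (h n) @ map LXp x) = g"
    using ev_append[OF E.aword_lists[OF hn] lx] ev_aword[OF hn] hinv_h n g ev_car[OF lx]
    unfolding n_def by (simp add: gs)
  then show ?thesis using w by blast
qed

definition "Psi g = E.cls (SOME w. w \<in> lists E.Y \<and> ev w = g)"

lemma Psi_ev: "w \<in> lists E.Y \<Longrightarrow> Psi (ev w) = E.cls w"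
proof -
  assume w: "w \<in> lists E.Y"
  define w' where "w' = (SOME w'. w' \<in> lists E.Y \<and> ev w' = ev w)"
  have "w' \<in> lists E.Y \<and> ev w' = ev w" unfolding w'_def by (rule someI[of _ w]) (use w in simp)
  then have w'l: "w' \<in> lists E.Y" and "ev w' = ev w" by auto
  then have "E.PE w' w" using ev_inj[OF w'l w] by simp
  then have "E.cls w' = E.cls w" by (rule pres_class_eq_iff[OF w'l, THEN iffD2])
  then show ?thesis unfolding Psi_def w'_def by simp
qed

lemma Psi_iso: "Psi \<in> iso G E.PM"
proof -
  have hom: "Psi \<in> hom G E.PM"
  proof (rule homI)
    fix g assume "g \<in> carrier G"
    then obtain w where "w \<in> lists E.Y" "ev w = g" using ev_surj by blast
    then show "Psi g \<in> carrier E.PM" using Psi_ev E.cls_carrier by metis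
  next
    fix g1 g2 assume "g1 \<in> carrier G" "g2 \<in> carrier G"
    then obtain w1 w2 where w: "w1 \<in> lists E.Y" "ev w1 = g1" "w2 \<in> lists E.Y" "ev w2 = g2" using ev_surj by metis
    then have "Psi (g1 \<otimes>\<^bsub>G\<^esub> g2) = E.cls (w1 @ w2)" using Psi_ev ev_append by (metis append_in_lists_conv)
    then show "Psi (g1 \<otimes>\<^bsub>G\<^esub> g2) = Psi g1 \<otimes>\<^bsub>E.PM\<^esub> Psi g2" using w Psi_ev E.cls_mult by metis
  qed
  have inj: "inj_on Psi (carrier G)"
  proof (rule inj_onI)
    fix g1 g2 assume "g1 \<in> carrier G" "g2 \<in> carrier G" and e: "Psi g1 = Psi g2"
    then obtain w1 w2 where w: "w1 \<in> lists E.Y" "ev w1 = g1" "w2 \<in> lists E.Y" "ev w2 = g2" using ev_surj by metis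
    then have "E.cls w1 = E.cls w2" using e Psi_ev by metis
    then have "E.PE w1 w2" by (rule pres_class_eq_iff[OF w(1), THEN iffD1])
    then show "g1 = g2" using ev_PE w by metis
  qed
  have surj: "Psi ` carrier G = carrier E.PM"
  proof
    show "Psi ` carrier G \<subseteq> carrier E.PM" using hom by (auto simp: hom_def)
  next
    show "carrier E.PM \<subseteq> Psi ` carrier G"
    proof
      fix C assume "C \<in> carrier E.PM"
      then obtain w where w: "w \<in> lists E.Y" "C = E.cls w" by (rule E.PM_carrierE)
      then have "C = Psi (ev w)" using Psi_ev by simp
      then show "C \<in> Psi ` carrier G" using ev_car[OF w(1)] by blast
    qed
  qed
  show ?thesis using hom inj surj by (simp add: iso_iff)
qed

end


theorem theorem2p6:
  fixes A :: "('a, 'm) monoid_scheme" and G :: "('g, 'n) monoid_scheme"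
    and I :: "('i::linorder) set"
  assumes "group A" and "group G"
  shows "schreier_ext G A (pres_monoid (B_gens I) (B_rels I)) \<longleftrightarrow>
    (\<exists>(f :: 'i \<Rightarrow> bool \<Rightarrow> 'i \<Rightarrow> bool \<Rightarrow> 'a) (psi :: 'i \<Rightarrow> bool \<Rightarrow> 'a \<Rightarrow> 'a).
       (\<forall>p\<in>I. \<forall>q\<in>I. \<forall>e d. p > q \<longrightarrow> f p e q d \<in> carrier A)
     \<and> (\<forall>p\<in>I. \<forall>e. psi p e \<in> iso A A)
     \<and> (\<forall>p\<in>I. \<forall>q\<in>I. \<forall>r\<in>I. \<forall>e d g. p > q \<and> q > r \<longrightarrow>
          f p e q d \<otimes>\<^bsub>A\<^esub> psi q d (f p e r g) \<otimes>\<^bsub>A\<^esub> f q d r g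
          = psi p e (f q d r g) \<otimes>\<^bsub>A\<^esub> f p e r g \<otimes>\<^bsub>A\<^esub> psi r g (f p e q d))
     \<and> (\<forall>p\<in>I. \<forall>q\<in>I. \<forall>e d. p > q \<longrightarrow>
          f p e q (\<not> d) \<otimes>\<^bsub>A\<^esub> psi q (\<not> d) (f p e q d) = \<one>\<^bsub>A\<^esub>)
     \<and> (\<forall>p\<in>I. \<forall>q\<in>I. \<forall>e d. p > q \<longrightarrow>
          psi p (\<not> e) (f p e q d) \<otimes>\<^bsub>A\<^esub> f p (\<not> e) q d = \<one>\<^bsub>A\<^esub>)
     \<and> (\<forall>p\<in>I. \<forall>q\<in>I. \<forall>e d. \<forall>a\<in>carrier A. p > q \<longrightarrow>
          psi p e (psi q d a) \<otimes>\<^bsub>A\<^esub> f p e q d = f p e q d \<otimes>\<^bsub>A\<^esub> psi q d (psi p e a))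
     \<and> (\<forall>r\<in>I. \<forall>e. \<forall>a\<in>carrier A. psi r (\<not> e) (psi r e a) = a)
     \<and> G \<cong> pres_monoid (G_gens A I) (G_rels A I f psi))"
proof
  assume "schreier_ext G A (pres_monoid (B_gens I) (B_rels I))"
  then obtain N where N: "N \<lhd> G" "G\<lparr>carrier := N\<rparr> \<cong> A" "G Mod N \<cong> pres_monoid (B_gens I) (B_rels I)"
    unfolding schreier_ext_def by blast
  obtain h where h: "h \<in> iso (G\<lparr>carrier := N\<rparr>) A" using N(2) unfolding is_iso_def by blast
  obtain th where th: "th \<in> iso (G Mod N) (pres_monoid (B_gens I) (B_rels I))" using N(3) unfolding is_iso_def by blast
  interpret F: fwd G A I N h th
    by (rule fwd.intro[OF assms(2) assms(1) N(1) h th])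
  show "\<exists>f psi. (\<forall>p\<in>I. \<forall>q\<in>I. \<forall>e d. p > q \<longrightarrow> f p e q d \<in> carrier A)
     \<and> (\<forall>p\<in>I. \<forall>e. psi p e \<in> iso A A)
     \<and> (\<forall>p\<in>I. \<forall>q\<in>I. \<forall>r\<in>I. \<forall>e d g. p > q \<and> q > r \<longrightarrow>
          f p e q d \<otimes>\<^bsub>A\<^esub> psi q d (f p e r g) \<otimes>\<^bsub>A\<^esub> f q d r g
          = psi p e (f q d r g) \<otimes>\<^bsub>A\<^esub> f p e r g \<otimes>\<^bsub>A\<^esub> psi r g (f p e q d))
     \<and> (\<forall>p\<in>I. \<forall>q\<in>I. \<forall>e d. p > q \<longrightarrow>
          f p e q (\<not> d) \<otimes>\<^bsub>A\<^esub> psi q (\<not> d) (f p e q d) = \<one>\<^bsub>A\<^esub>)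
     \<and> (\<forall>p\<in>I. \<forall>q\<in>I. \<forall>e d. p > q \<longrightarrow>
          psi p (\<not> e) (f p e q d) \<otimes>\<^bsub>A\<^esub> f p (\<not> e) q d = \<one>\<^bsub>A\<^esub>)
     \<and> (\<forall>p\<in>I. \<forall>q\<in>I. \<forall>e d. \<forall>a\<in>carrier A. p > q \<longrightarrow>
          psi p e (psi q d a) \<otimes>\<^bsub>A\<^esub> f p e q d = f p e q d \<otimes>\<^bsub>A\<^esub> psi q d (psi p e a))
     \<and> (\<forall>r\<in>I. \<forall>e. \<forall>a\<in>carrier A. psi r (\<not> e) (psi r e a) = a)
     \<and> G \<cong> pres_monoid (G_gens A I) (G_rels A I f psi)"
  proof (intro exI conjI)
    show "\<forall>p\<in>I. \<forall>q\<in>I. \<forall>e d. p > q \<longrightarrow> F.fF p e q d \<in> carrier A" by (auto intro: F.fF_car)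
    show "\<forall>p\<in>I. \<forall>e. F.psiF p e \<in> iso A A" by (auto intro: F.psiF_iso)
    show "\<forall>p\<in>I. \<forall>q\<in>I. \<forall>r\<in>I. \<forall>e d g. p > q \<and> q > r \<longrightarrow>
          F.fF p e q d \<otimes>\<^bsub>A\<^esub> F.psiF q d (F.fF p e r g) \<otimes>\<^bsub>A\<^esub> F.fF q d r g
          = F.psiF p e (F.fF q d r g) \<otimes>\<^bsub>A\<^esub> F.fF p e r g \<otimes>\<^bsub>A\<^esub> F.psiF r g (F.fF p e q d)"
      using F.cond1 by blast
    show "\<forall>p\<in>I. \<forall>q\<in>I. \<forall>e d. p > q \<longrightarrow>
          F.fF p e q (\<not> d) \<otimes>\<^bsub>A\<^esub> F.psiF q (\<not> d) (F.fF p e q d) = \<one>\<^bsub>A\<^esub>"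
      using F.cond2 by blast
    show "\<forall>p\<in>I. \<forall>q\<in>I. \<forall>e d. p > q \<longrightarrow>
          F.psiF p (\<not> e) (F.fF p e q d) \<otimes>\<^bsub>A\<^esub> F.fF p (\<not> e) q d = \<one>\<^bsub>A\<^esub>"
      using F.cond3 by blast
    show "\<forall>p\<in>I. \<forall>q\<in>I. \<forall>e d. \<forall>a\<in>carrier A. p > q \<longrightarrow>
          F.psiF p e (F.psiF q d a) \<otimes>\<^bsub>A\<^esub> F.fF p e q d = F.fF p e q d \<otimes>\<^bsub>A\<^esub> F.psiF q d (F.psiF p e a)"
      using F.cond4 by blast
    show "\<forall>r\<in>I. \<forall>e. \<forall>a\<in>carrier A. F.psiF r (\<not> e) (F.psiF r e a) = a"
      using F.cond5 by blast
    show "G \<cong> pres_monoid (G_gens A I) (G_rels A I F.fF F.psiF)"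
      using F.Psi_iso by (rule is_isoI)
  qed
next
  assume "\<exists>f psi. (\<forall>p\<in>I. \<forall>q\<in>I. \<forall>e d. p > q \<longrightarrow> f p e q d \<in> carrier A)
     \<and> (\<forall>p\<in>I. \<forall>e. psi p e \<in> iso A A)
     \<and> (\<forall>p\<in>I. \<forall>q\<in>I. \<forall>r\<in>I. \<forall>e d g. p > q \<and> q > r \<longrightarrow>
          f p e q d \<otimes>\<^bsub>A\<^esub> psi q d (f p e r g) \<otimes>\<^bsub>A\<^esub> f q d r g
          = psi p e (f q d r g) \<otimes>\<^bsub>A\<^esub> f p e r g \<otimes>\<^bsub>A\<^esub> psi r g (f p e q d))
     \<and> (\<forall>p\<in>I. \<forall>q\<in>I. \<forall>e d. p > q \<longrightarrow>
          f p e q (\<not> d) \<otimes>\<^bsub>A\<^esub> psi q (\<not> d) (f p e q d) = \<one>\<^bsub>A\<^esub>)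
     \<and> (\<forall>p\<in>I. \<forall>q\<in>I. \<forall>e d. p > q \<longrightarrow>
          psi p (\<not> e) (f p e q d) \<otimes>\<^bsub>A\<^esub> f p (\<not> e) q d = \<one>\<^bsub>A\<^esub>)
     \<and> (\<forall>p\<in>I. \<forall>q\<in>I. \<forall>e d. \<forall>a\<in>carrier A. p > q \<longrightarrow>
          psi p e (psi q d a) \<otimes>\<^bsub>A\<^esub> f p e q d = f p e q d \<otimes>\<^bsub>A\<^esub> psi q d (psi p e a))
     \<and> (\<forall>r\<in>I. \<forall>e. \<forall>a\<in>carrier A. psi r (\<not> e) (psi r e a) = a)
     \<and> G \<cong> pres_monoid (G_gens A I) (G_rels A I f psi)"
  then obtain f psi where
      h1: "\<forall>p\<in>I. \<forall>q\<in>I. \<forall>e d. p > q \<longrightarrow> f p e q d \<in> carrier A"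
     and h2: "\<forall>p\<in>I. \<forall>e. psi p e \<in> iso A A"
     and h3: "\<forall>p\<in>I. \<forall>q\<in>I. \<forall>r\<in>I. \<forall>e d g. p > q \<and> q > r \<longrightarrow>
          f p e q d \<otimes>\<^bsub>A\<^esub> psi q d (f p e r g) \<otimes>\<^bsub>A\<^esub> f q d r g
          = psi p e (f q d r g) \<otimes>\<^bsub>A\<^esub> f p e r g \<otimes>\<^bsub>A\<^esub> psi r g (f p e q d)"
     and h4: "\<forall>p\<in>I. \<forall>q\<in>I. \<forall>e d. p > q \<longrightarrow>
          f p e q (\<not> d) \<otimes>\<^bsub>A\<^esub> psi q (\<not> d) (f p e q d) = \<one>\<^bsub>A\<^esub>"
     and h5: "\<forall>p\<in>I. \<forall>q\<in>I. \<forall>e d. p > q \<longrightarrow>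
          psi p (\<not> e) (f p e q d) \<otimes>\<^bsub>A\<^esub> f p (\<not> e) q d = \<one>\<^bsub>A\<^esub>"
     and h6: "\<forall>p\<in>I. \<forall>q\<in>I. \<forall>e d. \<forall>a\<in>carrier A. p > q \<longrightarrow>
          psi p e (psi q d a) \<otimes>\<^bsub>A\<^esub> f p e q d = f p e q d \<otimes>\<^bsub>A\<^esub> psi q d (psi p e a)"
     and h7: "\<forall>r\<in>I. \<forall>e. \<forall>a\<in>carrier A. psi r (\<not> e) (psi r e a) = a"
     and h8: "G \<cong> pres_monoid (G_gens A I) (G_rels A I f psi)"
    by (elim exE conjE) (rule that; assumption)
  interpret C: ext_cond A I f psi
    apply (rule ext_cond.intro)
    apply (rule ext_data.intro)
    using assms(1) apply simp
    using h1 apply blast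
    using h2 apply blast
    apply (rule ext_cond_axioms.intro)
    using h3 apply blast
    using h4 apply blast
    using h5 apply blast
    using h6 apply blast
    using h7 apply blast
    done
  obtain phi where "phi \<in> iso G (pres_monoid (G_gens A I) (G_rels A I f psi))" using h8 unfolding is_iso_def by blast
  then show "schreier_ext G A (pres_monoid (B_gens I) (B_rels I))" by (rule C.backward[OF assms(2)])
qed


end
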